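(* Let $F$ be an algebraically closed field. Let $\tau=\prod_{p \text{ prime}}p^{k_p}$ be a Steinitz number such that $k_q=\infty$ for some prime $q$. Then for every infinite cardinal $\alpha$ there exists a unital locally matrix algebra $A$ over $F$ with $\dim_F A=\alpha$ and $\mathbf{n}(A)=\tau$.
   Context: A Steinitz number is a formal product $\prod_p p^{k_p}$ over primes with $k_p\in\mathbb{N}\cup\{0,\infty\}$, ordered by divisibility (exponents add with $t+\infty=\infty$). A unital algebra $A$ is locally matrix if every finite subset lies in a subalgebra $B$ with $1_A\in B$ and $B\cong M_n(F)$ for some $n$. $D(A)$ is the set of $n$ for which $A$ has a subalgebra containing $1_A$ isomorphic to $M_n(F)$, and $\mathbf{n}(A)$ is the least common multiple of $D(A)$. *)

theory Defs
  imports "HOL-Computational_Algebra.Computational_Algebra" "Jordan_Normal_Form.Matrix"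
    "HOL-Library.Extended_Nat"
begin

text \<open>A Steinitz number \<open>\<Prod>\<^sub>p p^(k_p)\<close> is represented by its exponent map
  \<open>k :: nat \<Rightarrow> enat\<close> (with \<open>\<infinity>\<close> allowed); the values at non-primes are required to be 0.\<close>

definition steinitz :: "(nat \<Rightarrow> enat) \<Rightarrow> bool" where
  "steinitz k \<longleftrightarrow> (\<forall>p. \<not> prime p \<longrightarrow> k p = 0)"

definition steinitz_lcm :: "nat set \<Rightarrow> (nat \<Rightarrow> enat)" where
  "steinitz_lcm S = (\<lambda>p. if prime p then (SUP n\<in>S. enat (multiplicity p n)) else 0)"

text \<open>An \<open>F\<close>-vector space of dimension \<open>|'b|\<close> is represented in coordinates as the space of
  finitely supported functions \<open>'b \<Rightarrow> F\<close> (basis: the indicator functions of points of \<open>'b\<close>).\<close>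

definition fin_supp :: "('b \<Rightarrow> 'a::zero) set" where
  "fin_supp = {f. finite {x. f x \<noteq> 0}}"

definition unital_algebra ::
  "(('b \<Rightarrow> 'a::field) \<Rightarrow> ('b \<Rightarrow> 'a) \<Rightarrow> ('b \<Rightarrow> 'a)) \<Rightarrow> ('b \<Rightarrow> 'a) \<Rightarrow> bool" where
  "unital_algebra m e \<longleftrightarrow>
     e \<in> fin_supp \<and>
     (\<forall>f\<in>fin_supp. \<forall>g\<in>fin_supp. m f g \<in> fin_supp) \<and>
     (\<forall>f\<in>fin_supp. \<forall>g\<in>fin_supp. \<forall>h\<in>fin_supp.
        m (\<lambda>x. f x + g x) h = (\<lambda>x. m f h x + m g h x) \<and>
        m f (\<lambda>x. g x + h x) = (\<lambda>x. m f g x + m f h x) \<and>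
        m (m f g) h = m f (m g h)) \<and>
     (\<forall>c. \<forall>f\<in>fin_supp. \<forall>g\<in>fin_supp.
        m (\<lambda>x. c * f x) g = (\<lambda>x. c * m f g x) \<and>
        m f (\<lambda>x. c * g x) = (\<lambda>x. c * m f g x)) \<and>
     (\<forall>f\<in>fin_supp. m e f = f \<and> m f e = f)"

text \<open>\<open>matrix_embedding m e n \<phi>\<close>: \<open>\<phi>\<close> is an injective unital \<open>F\<close>-algebra homomorphism from
  \<open>M_n(F)\<close> into the algebra; its image is then a subalgebra containing \<open>1\<close> and isomorphic to
  \<open>M_n(F)\<close>, and every such subalgebra arises this way.\<close>

definition matrix_embedding ::
  "(('b \<Rightarrow> 'a::field) \<Rightarrow> ('b \<Rightarrow> 'a) \<Rightarrow> ('b \<Rightarrow> 'a)) \<Rightarrow> ('b \<Rightarrow> 'a) \<Rightarrow> nat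
     \<Rightarrow> ('a mat \<Rightarrow> ('b \<Rightarrow> 'a)) \<Rightarrow> bool" where
  "matrix_embedding m e n \<phi> \<longleftrightarrow>
     (\<forall>M\<in>carrier_mat n n. \<phi> M \<in> fin_supp) \<and>
     inj_on \<phi> (carrier_mat n n) \<and>
     (\<forall>M\<in>carrier_mat n n. \<forall>N\<in>carrier_mat n n.
        \<phi> (M + N) = (\<lambda>x. \<phi> M x + \<phi> N x) \<and> \<phi> (M * N) = m (\<phi> M) (\<phi> N)) \<and>
     (\<forall>c. \<forall>M\<in>carrier_mat n n. \<phi> (c \<cdot>\<^sub>m M) = (\<lambda>x. c * \<phi> M x)) \<and>
     \<phi> (1\<^sub>m n) = e"

definition locally_matrix ::
  "(('b \<Rightarrow> 'a::field) \<Rightarrow> ('b \<Rightarrow> 'a) \<Rightarrow> ('b \<Rightarrow> 'a)) \<Rightarrow> ('b \<Rightarrow> 'a) \<Rightarrow> bool" where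
  "locally_matrix m e \<longleftrightarrow>
     (\<forall>S. finite S \<and> S \<subseteq> fin_supp \<longrightarrow>
        (\<exists>n \<phi>. n > 0 \<and> matrix_embedding m e n \<phi> \<and> S \<subseteq> \<phi> ` carrier_mat n n))"

definition matrix_degrees ::
  "(('b \<Rightarrow> 'a::field) \<Rightarrow> ('b \<Rightarrow> 'a) \<Rightarrow> ('b \<Rightarrow> 'a)) \<Rightarrow> ('b \<Rightarrow> 'a) \<Rightarrow> nat set" where
  "matrix_degrees m e = {n. n > 0 \<and> (\<exists>\<phi>. matrix_embedding m e n \<phi>)}"

definition steinitz_char ::
  "(('b \<Rightarrow> 'a::field) \<Rightarrow> ('b \<Rightarrow> 'a) \<Rightarrow> ('b \<Rightarrow> 'a)) \<Rightarrow> ('b \<Rightarrow> 'a) \<Rightarrow> (nat \<Rightarrow> enat)" where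
  "steinitz_char m e = steinitz_lcm (matrix_degrees m e)"

end

theory Submission
  imports Defs "HOL-Algebra.Free_Abelian_Groups" "HOL-Library.Function_Algebras"
begin

definition offeq :: "'i set \<Rightarrow> ('i \<Rightarrow> 'x) \<Rightarrow> ('i \<Rightarrow> 'x) \<Rightarrow> bool" where
  "offeq J w v \<longleftrightarrow> (\<forall>i. i \<notin> J \<longrightarrow> w i = v i)"

lemma offeq_refl[simp]: "offeq J w w" by (simp add: offeq_def)
lemma offeq_sym: "offeq J w v \<Longrightarrow> offeq J v w" by (simp add: offeq_def)
lemma offeq_trans: "offeq J w v \<Longrightarrow> offeq J v x \<Longrightarrow> offeq J w x" by (simp add: offeq_def)
lemma offeq_mono: "offeq J w v \<Longrightarrow> J \<subseteq> K \<Longrightarrow> offeq K w v" by (auto simp add: offeq_def)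

definition shift :: "'i set \<Rightarrow> ('i \<Rightarrow> 'x) \<Rightarrow> ('i \<Rightarrow> 'x) \<Rightarrow> ('i \<Rightarrow> 'x)" where
  "shift J x v = (\<lambda>i. if i \<in> J then v i else x i)"

locale tens =
  fixes d :: "'i \<Rightarrow> nat"
  assumes d_pos: "\<And>i. 0 < d i"
begin

definition W :: "('i \<Rightarrow> nat) set" where
  "W = {w. finite {i. w i \<noteq> 0} \<and> (\<forall>i. w i < d i)}"

definition ext :: "'i set \<Rightarrow> ('i \<Rightarrow> nat) \<Rightarrow> ('i \<Rightarrow> nat) set" where
  "ext J w = {v \<in> W. offeq J w v}"

definition Pd :: "'i set \<Rightarrow> ('i \<Rightarrow> nat) set" where
  "Pd J = PiE J (\<lambda>i. {..<d i})"

lemma zero_W: "(\<lambda>_. 0) \<in> W"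
  using d_pos by (simp add: W_def)

lemma shift_W:
  assumes "finite J" "x \<in> W" "\<forall>i\<in>J. v i < d i"
  shows "shift J x v \<in> W"
proof -
  have "{i. shift J x v i \<noteq> 0} \<subseteq> J \<union> {i. x i \<noteq> 0}" by (auto simp: shift_def)
  moreover have "finite (J \<union> {i. x i \<noteq> 0})" using assms by (simp add: W_def)
  ultimately have "finite {i. shift J x v i \<noteq> 0}" by (rule finite_subset)
  moreover have "\<forall>i. shift J x v i < d i" using assms by (auto simp: W_def shift_def)
  ultimately show ?thesis by (simp add: W_def)
qed

lemma bij_restrict_ext:
  assumes "finite J" "w \<in> W"
  shows "bij_betw (\<lambda>v. restrict v J) (ext J w) (Pd J)"
proof (rule bij_betw_byWitness[where f' = "shift J w"])
  show "\<forall>a\<in>ext J w. shift J w (restrict a J) = a"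
    by (auto simp: ext_def shift_def offeq_def fun_eq_iff)
  show "\<forall>a'\<in>Pd J. restrict (shift J w a') J = a'"
    by (auto simp: Pd_def shift_def fun_eq_iff PiE_def extensional_def)
  show "(\<lambda>v. restrict v J) ` ext J w \<subseteq> Pd J"
  proof
    fix y assume "y \<in> (\<lambda>v. restrict v J) ` ext J w"
    then obtain v where v: "v \<in> ext J w" "y = restrict v J" by auto
    then have "\<forall>i. v i < d i" by (simp add: ext_def W_def)
    then show "y \<in> Pd J" using v(2) by (simp add: Pd_def)
  qed
  show "shift J w ` Pd J \<subseteq> ext J w"
  proof
    fix y assume "y \<in> shift J w ` Pd J"
    then obtain a where a: "a \<in> Pd J" "y = shift J w a" by auto
    have "shift J w a \<in> W" using shift_W[OF assms(1,2), of a] a(1) by (auto simp: Pd_def)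
    moreover have "offeq J w (shift J w a)" by (simp add: offeq_def shift_def)
    ultimately show "y \<in> ext J w" using a by (simp add: ext_def)
  qed
qed

lemma finite_Pd: "finite J \<Longrightarrow> finite (Pd J)"
  by (simp add: Pd_def finite_PiE)

lemma card_Pd: "finite J \<Longrightarrow> card (Pd J) = (\<Prod>i\<in>J. d i)"
  by (simp add: Pd_def card_PiE)

lemma finite_ext: "finite J \<Longrightarrow> finite (ext J w)"
proof (cases "w \<in> W")
  case True
  assume "finite J"
  then show ?thesis using bij_restrict_ext[OF _ True] finite_Pd bij_betw_finite by blast
next
  case False
  assume J: "finite J"
  show ?thesis
  proof (cases "ext J w = {}")
    case True then show ?thesis by simp
  next
    case False
    then obtain x where x: "x \<in> ext J w" by auto
    then have "ext J w = ext J x" by (auto simp: ext_def intro: offeq_trans offeq_sym)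
    moreover have "x \<in> W" using x by (simp add: ext_def)
    ultimately show ?thesis using bij_restrict_ext[OF J] finite_Pd[OF J] bij_betw_finite by metis
  qed
qed

lemma card_ext: "finite J \<Longrightarrow> w \<in> W \<Longrightarrow> card (ext J w) = (\<Prod>i\<in>J. d i)"
  using bij_restrict_ext card_Pd bij_betw_same_card by metis

lemma ext_eq: "v \<in> ext J w \<Longrightarrow> ext J v = ext J w"
  by (auto simp: ext_def intro: offeq_trans offeq_sym)

lemma ext_mono: "J \<subseteq> K \<Longrightarrow> ext J w \<subseteq> ext K w"
  by (auto simp: ext_def intro: offeq_mono)

lemma bij_shift_ext:
  assumes "finite L" "w \<in> W" "x \<in> W"
  shows "bij_betw (shift L x) (ext L w) (ext L x)"
proof (rule bij_betw_byWitness[where f' = "shift L w"])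
  show "\<forall>a\<in>ext L w. shift L w (shift L x a) = a"
    by (auto simp: ext_def shift_def offeq_def fun_eq_iff)
  show "\<forall>a\<in>ext L x. shift L x (shift L w a) = a"
    by (auto simp: ext_def shift_def offeq_def fun_eq_iff)
  show "shift L x ` ext L w \<subseteq> ext L x"
  proof
    fix y assume "y \<in> shift L x ` ext L w"
    then obtain v where v: "v \<in> ext L w" "y = shift L x v" by auto
    then have "\<forall>i. v i < d i" by (simp add: ext_def W_def)
    then have "shift L x v \<in> W" using shift_W[OF assms(1) assms(3)] by blast
    moreover have "offeq L x (shift L x v)" by (simp add: offeq_def shift_def)
    ultimately show "y \<in> ext L x" using v by (simp add: ext_def)
  qed
  show "shift L w ` ext L x \<subseteq> ext L w"
  proof
    fix y assume "y \<in> shift L w ` ext L x"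
    then obtain v where v: "v \<in> ext L x" "y = shift L w v" by auto
    then have "\<forall>i. v i < d i" by (simp add: ext_def W_def)
    then have "shift L w v \<in> W" using shift_W[OF assms(1) assms(2)] by blast
    moreover have "offeq L w (shift L w v)" by (simp add: offeq_def shift_def)
    ultimately show "y \<in> ext L w" using v by (simp add: ext_def)
  qed
qed

definition loc :: "'i set \<Rightarrow> (('i \<Rightarrow> nat) \<Rightarrow> ('i \<Rightarrow> nat) \<Rightarrow> 'a::field) \<Rightarrow> bool" where
  "loc J a \<longleftrightarrow> finite J \<and>
     (\<forall>w v. a w v \<noteq> 0 \<longrightarrow> w \<in> W \<and> v \<in> W \<and> offeq J w v) \<and>
     (\<forall>w w' v v'. w \<in> W \<longrightarrow> w' \<in> W \<longrightarrow> v \<in> W \<longrightarrow> v' \<in> W \<longrightarrow> offeq J w w' \<longrightarrow> offeq J v v'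
        \<longrightarrow> (\<forall>i\<in>J. w i = v i \<and> w' i = v' i) \<longrightarrow> a w w' = a v v')"

lemma locD1: assumes "loc J a" "a w v \<noteq> 0" shows "w \<in> W \<and> v \<in> W \<and> offeq J w v"
proof -
  have H: "\<forall>w v. a w v \<noteq> 0 \<longrightarrow> w \<in> W \<and> v \<in> W \<and> offeq J w v"
    using assms(1) unfolding loc_def by (elim conjE)
  show ?thesis using H assms(2) by blast
qed

lemma locD2: "loc J a \<Longrightarrow> w \<in> W \<Longrightarrow> w' \<in> W \<Longrightarrow> v \<in> W \<Longrightarrow> v' \<in> W \<Longrightarrow> offeq J w w' \<Longrightarrow> offeq J v v'
        \<Longrightarrow> (\<And>i. i\<in>J \<Longrightarrow> w i = v i \<and> w' i = v' i) \<Longrightarrow> a w w' = a v v'"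
proof -
  assume a: "loc J a" and h: "w \<in> W" "w' \<in> W" "v \<in> W" "v' \<in> W" "offeq J w w'" "offeq J v v'"
    and e: "(\<And>i. i\<in>J \<Longrightarrow> w i = v i \<and> w' i = v' i)"
  have H: "\<forall>w w' v v'. w \<in> W \<longrightarrow> w' \<in> W \<longrightarrow> v \<in> W \<longrightarrow> v' \<in> W \<longrightarrow> offeq J w w' \<longrightarrow> offeq J v v'
        \<longrightarrow> (\<forall>i\<in>J. w i = v i \<and> w' i = v' i) \<longrightarrow> a w w' = a v v'"
    using a unfolding loc_def by (elim conjE)
  show ?thesis using H[rule_format, OF h e] .
qed

lemma loc_finite: "loc J a \<Longrightarrow> finite J" unfolding loc_def by (elim conjE)

lemma loc_mono:
  assumes a: "loc J a" and JK: "J \<subseteq> K" and K: "finite K"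
  shows "loc K a"
  unfolding loc_def
proof (intro conjI K)
  show "\<forall>w v. a w v \<noteq> 0 \<longrightarrow> w \<in> W \<and> v \<in> W \<and> offeq K w v"
    using locD1[OF a] offeq_mono[OF _ JK] by blast
next
  show "\<forall>w w' v v'. w \<in> W \<longrightarrow> w' \<in> W \<longrightarrow> v \<in> W \<longrightarrow> v' \<in> W \<longrightarrow> offeq K w w' \<longrightarrow> offeq K v v'
        \<longrightarrow> (\<forall>i\<in>K. w i = v i \<and> w' i = v' i) \<longrightarrow> a w w' = a v v'"
  proof (intro allI impI)
  fix w w' v v'
  assume h: "w \<in> W" "w' \<in> W" "v \<in> W" "v' \<in> W" "offeq K w w'" "offeq K v v'"
     "\<forall>i\<in>K. w i = v i \<and> w' i = v' i"
  show "a w w' = a v v'"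
  proof (cases "a w w' = 0 \<and> a v v' = 0")
    case True then show ?thesis by simp
  next
    case False
    then have "offeq J w w' \<or> offeq J v v'" using locD1[OF a] by blast
    then have o: "offeq J w w' \<and> offeq J v v'"
      using h(5,6,7) JK unfolding offeq_def by (metis subsetD)
    have e: "\<And>i. i \<in> J \<Longrightarrow> w i = v i \<and> w' i = v' i" using h(7) JK by blast
    show ?thesis using locD2[OF a h(1-4) conjunct1[OF o] conjunct2[OF o] e] .
  qed
  qed
qed

definition mmul :: "(('i \<Rightarrow> nat) \<Rightarrow> ('i \<Rightarrow> nat) \<Rightarrow> 'a::field) \<Rightarrow> (('i \<Rightarrow> nat) \<Rightarrow> ('i \<Rightarrow> nat) \<Rightarrow> 'a)
   \<Rightarrow> (('i \<Rightarrow> nat) \<Rightarrow> ('i \<Rightarrow> nat) \<Rightarrow> 'a)" where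
  "mmul a b = (\<lambda>w w'. \<Sum>v\<in>{v. a w v \<noteq> 0}. a w v * b v w')"

definition act :: "(('i \<Rightarrow> nat) \<Rightarrow> ('i \<Rightarrow> nat) \<Rightarrow> 'a::field) \<Rightarrow> (('i \<Rightarrow> nat) \<Rightarrow> 'a) \<Rightarrow> (('i \<Rightarrow> nat) \<Rightarrow> 'a)" where
  "act a g = (\<lambda>w. \<Sum>v\<in>{v. a w v \<noteq> 0}. a w v * g v)"

definition ident :: "('i \<Rightarrow> nat) \<Rightarrow> ('i \<Rightarrow> nat) \<Rightarrow> 'a::field" where
  "ident = (\<lambda>w w'. if w \<in> W \<and> w' = w then 1 else 0)"

lemma row_sub: "loc J a \<Longrightarrow> J \<subseteq> K \<Longrightarrow> {v. a w v \<noteq> 0} \<subseteq> ext K w"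
  by (auto simp: ext_def dest: locD1 intro: offeq_mono)

lemma mmul_eq:
  assumes "loc J a" "J \<subseteq> K" "finite K"
  shows "mmul a b w w' = (\<Sum>v\<in>ext K w. a w v * b v w')"
  unfolding mmul_def
  by (rule sum.mono_neutral_left[OF finite_ext[OF assms(3)] row_sub[OF assms(1,2)]]) auto

lemma act_eq:
  assumes "loc J a" "J \<subseteq> K" "finite K"
  shows "act a g w = (\<Sum>v\<in>ext K w. a w v * g v)"
  unfolding act_def
  by (rule sum.mono_neutral_left[OF finite_ext[OF assms(3)] row_sub[OF assms(1,2)]]) auto

end

definition madd :: "('x \<Rightarrow> 'y \<Rightarrow> 'a::field) \<Rightarrow> ('x \<Rightarrow> 'y \<Rightarrow> 'a) \<Rightarrow> ('x \<Rightarrow> 'y \<Rightarrow> 'a)" where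
  "madd a b = (\<lambda>w w'. a w w' + b w w')"
definition msc :: "'a::field \<Rightarrow> ('x \<Rightarrow> 'y \<Rightarrow> 'a) \<Rightarrow> ('x \<Rightarrow> 'y \<Rightarrow> 'a)" where
  "msc c a = (\<lambda>w w'. c * a w w')"

context tens
begin

lemma loc_intro:
  assumes "finite J"
    and "\<And>w v. a w v \<noteq> 0 \<Longrightarrow> w \<in> W \<and> v \<in> W \<and> offeq J w v"
    and "\<And>w w' v v'. w \<in> W \<Longrightarrow> w' \<in> W \<Longrightarrow> v \<in> W \<Longrightarrow> v' \<in> W \<Longrightarrow> offeq J w w' \<Longrightarrow> offeq J v v'
        \<Longrightarrow> (\<And>i. i\<in>J \<Longrightarrow> w i = v i \<and> w' i = v' i) \<Longrightarrow> a w w' = a v v'"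
  shows "loc J a"
  unfolding loc_def
proof (intro conjI assms(1))
  show "\<forall>w v. a w v \<noteq> 0 \<longrightarrow> w \<in> W \<and> v \<in> W \<and> offeq J w v" using assms(2) by blast
  show "\<forall>w w' v v'. w \<in> W \<longrightarrow> w' \<in> W \<longrightarrow> v \<in> W \<longrightarrow> v' \<in> W \<longrightarrow> offeq J w w' \<longrightarrow> offeq J v v'
        \<longrightarrow> (\<forall>i\<in>J. w i = v i \<and> w' i = v' i) \<longrightarrow> a w w' = a v v'"
  proof (intro allI impI)
    fix w w' v v' assume h: "w \<in> W" "w' \<in> W" "v \<in> W" "v' \<in> W" "offeq J w w'" "offeq J v v'"
        "\<forall>i\<in>J. w i = v i \<and> w' i = v' i"
    show "a w w' = a v v'" by (rule assms(3)[OF h(1-6)]) (use h(7) in blast)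
  qed
qed

lemma loc_zero: "finite J \<Longrightarrow> loc J (\<lambda>w w'. 0)"
  by (rule loc_intro) auto

lemma loc_madd:
  assumes a: "loc J a" and b: "loc J b"
  shows "loc J (madd a b)"
proof (rule loc_intro)
  show "finite J" using loc_finite[OF a] .
  fix w v assume "madd a b w v \<noteq> 0"
  then have "a w v \<noteq> 0 \<or> b w v \<noteq> 0" by (auto simp: madd_def)
  then show "w \<in> W \<and> v \<in> W \<and> offeq J w v" using locD1[OF a] locD1[OF b] by blast
next
  fix w w' v v' assume h: "w \<in> W" "w' \<in> W" "v \<in> W" "v' \<in> W" "offeq J w w'" "offeq J v v'"
    "\<And>i. i\<in>J \<Longrightarrow> w i = v i \<and> w' i = v' i"
  show "madd a b w w' = madd a b v v'"
    using locD2[OF a h] locD2[OF b h] by (simp add: madd_def)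
qed

lemma loc_msc:
  assumes a: "loc J a"
  shows "loc J (msc c a)"
proof (rule loc_intro)
  show "finite J" using loc_finite[OF a] .
  fix w v assume "msc c a w v \<noteq> 0"
  then have "a w v \<noteq> 0" by (auto simp: msc_def)
  then show "w \<in> W \<and> v \<in> W \<and> offeq J w v" using locD1[OF a] by blast
next
  fix w w' v v' assume h: "w \<in> W" "w' \<in> W" "v \<in> W" "v' \<in> W" "offeq J w w'" "offeq J v v'"
    "\<And>i. i\<in>J \<Longrightarrow> w i = v i \<and> w' i = v' i"
  show "msc c a w w' = msc c a v v'"
    using locD2[OF a h] by (simp add: msc_def)
qed

lemma loc_sum:
  assumes S: "finite S" and J: "finite J" and a: "\<And>s. s \<in> S \<Longrightarrow> loc J (f s)"
  shows "loc J (\<lambda>w w'. \<Sum>s\<in>S. f s w w')"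
proof (rule loc_intro[OF J])
  fix w v assume "(\<Sum>s\<in>S. f s w v) \<noteq> 0"
  then obtain s where "s \<in> S" "f s w v \<noteq> 0" by (meson sum.not_neutral_contains_not_neutral)
  then show "w \<in> W \<and> v \<in> W \<and> offeq J w v" using locD1[OF a] by blast
next
  fix w w' v v' assume h: "w \<in> W" "w' \<in> W" "v \<in> W" "v' \<in> W" "offeq J w w'" "offeq J v v'"
    "\<And>i. i\<in>J \<Longrightarrow> w i = v i \<and> w' i = v' i"
  show "(\<Sum>s\<in>S. f s w w') = (\<Sum>s\<in>S. f s v v')"
    by (rule sum.cong[OF refl]) (rule locD2[OF a h])
qed

lemma loc_ident: "loc {} ident"
proof (rule loc_intro)
  fix w v assume "(ident w v :: 'a) \<noteq> 0"
  then show "w \<in> W \<and> v \<in> W \<and> offeq {} w v" by (auto simp: ident_def split: if_splits)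
next
  fix w w' v v' assume h: "w \<in> W" "w' \<in> W" "v \<in> W" "v' \<in> W" "offeq {} w w'" "offeq {} v v'"
  then have "w' = w" "v' = v" by (auto simp: offeq_def fun_eq_iff)
  then show "(ident w w' :: 'a) = ident v v'" using h by (simp add: ident_def)
qed simp

lemma loc_mmul:
  assumes a: "loc J a" and b: "loc K b"
  shows "loc (J \<union> K) (mmul a b)"
proof -
  let ?L = "J \<union> K"
  have L: "finite ?L" using loc_finite[OF a] loc_finite[OF b] by simp
  have aL: "loc ?L a" by (rule loc_mono[OF a _ L]) auto
  have bL: "loc ?L b" by (rule loc_mono[OF b _ L]) auto
  show ?thesis
  proof (rule loc_intro[OF L])
    fix w w' assume "mmul a b w w' \<noteq> 0"
    then obtain v where "a w v * b v w' \<noteq> 0" unfolding mmul_def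
      by (meson sum.not_neutral_contains_not_neutral)
    then have "a w v \<noteq> 0" "b v w' \<noteq> 0" by auto
    then show "w \<in> W \<and> w' \<in> W \<and> offeq ?L w w'"
      using locD1[OF aL] locD1[OF bL] offeq_trans by blast
  next
    fix w w' x x' assume h: "w \<in> W" "w' \<in> W" "x \<in> W" "x' \<in> W" "offeq ?L w w'" "offeq ?L x x'"
      "\<And>i. i\<in>?L \<Longrightarrow> w i = x i \<and> w' i = x' i"
    have "mmul a b w w' = (\<Sum>v\<in>ext ?L w. a w v * b v w')" by (rule mmul_eq[OF aL _ L]) simp
    also have "\<dots> = (\<Sum>v\<in>ext ?L w. a x (shift ?L x v) * b (shift ?L x v) x')"
    proof (rule sum.cong[OF refl])
      fix v assume v: "v \<in> ext ?L w"
      have vW: "v \<in> W" and wv: "offeq ?L w v" using v by (auto simp: ext_def)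
      have sv: "shift ?L x v \<in> ext ?L x" using bij_betwE[OF bij_shift_ext[OF L h(1) h(3)]] v by blast
      have sW: "shift ?L x v \<in> W" and xs: "offeq ?L x (shift ?L x v)" using sv by (auto simp: ext_def)
      have e: "\<And>i. i \<in> ?L \<Longrightarrow> v i = shift ?L x v i" by (simp add: shift_def)
      have 1: "a w v = a x (shift ?L x v)"
        by (rule locD2[OF aL h(1) vW h(3) sW wv xs]) (use h(7) e in auto)
      have vw': "offeq ?L v w'" using offeq_trans[OF offeq_sym[OF wv] h(5)] .
      have sx': "offeq ?L (shift ?L x v) x'" using offeq_trans[OF offeq_sym[OF xs] h(6)] .
      have 2: "b v w' = b (shift ?L x v) x'"
        by (rule locD2[OF bL vW h(2) sW h(4) vw' sx']) (use h(7) e in auto)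
      show "a w v * b v w' = a x (shift ?L x v) * b (shift ?L x v) x'" using 1 2 by simp
    qed
    also have "\<dots> = (\<Sum>v\<in>ext ?L x. a x v * b v x')"
      by (rule sum.reindex_bij_betw[OF bij_shift_ext[OF L h(1) h(3)]])
    also have "\<dots> = mmul a b x x'" by (rule mmul_eq[OF aL _ L, symmetric]) simp
    finally show "mmul a b w w' = mmul a b x x'" .
  qed
qed

lemma mmul_assoc:
  assumes a: "loc J a" and b: "loc K b" and c: "loc M c"
  shows "mmul (mmul a b) c = mmul a (mmul b c)"
proof (intro ext)
  fix w w'
  let ?L = "J \<union> K \<union> M"
  have L: "finite ?L" using loc_finite[OF a] loc_finite[OF b] loc_finite[OF c] by simp
  let ?E = "ext ?L w"
  have "mmul (mmul a b) c w w' = (\<Sum>v\<in>?E. mmul a b w v * c v w')"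
    by (rule mmul_eq[OF loc_mmul[OF a b] _ L]) auto
  also have "\<dots> = (\<Sum>v\<in>?E. (\<Sum>x\<in>?E. a w x * b x v) * c v w')"
    by (rule sum.cong[OF refl], subst mmul_eq[OF a _ L]) auto
  also have "\<dots> = (\<Sum>v\<in>?E. \<Sum>x\<in>?E. a w x * (b x v * c v w'))"
    by (simp add: sum_distrib_right mult.assoc)
  also have "\<dots> = (\<Sum>x\<in>?E. \<Sum>v\<in>?E. a w x * (b x v * c v w'))"
    by (rule sum.swap)
  also have "\<dots> = (\<Sum>x\<in>?E. a w x * mmul b c x w')"
  proof (rule sum.cong[OF refl])
    fix x assume x: "x \<in> ?E"
    have "mmul b c x w' = (\<Sum>v\<in>ext ?L x. b x v * c v w')" by (rule mmul_eq[OF b _ L]) auto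
    also have "\<dots> = (\<Sum>v\<in>?E. b x v * c v w')" using ext_eq[OF x] by simp
    finally show "(\<Sum>v\<in>?E. a w x * (b x v * c v w')) = a w x * mmul b c x w'"
      by (simp add: sum_distrib_left)
  qed
  also have "\<dots> = mmul a (mmul b c) w w'" by (rule mmul_eq[OF a _ L, symmetric]) auto
  finally show "mmul (mmul a b) c w w' = mmul a (mmul b c) w w'" .
qed

lemma act_mmul:
  assumes a: "loc J a" and b: "loc K b"
  shows "act (mmul a b) g = act a (act b g)"
proof (intro ext)
  fix w
  let ?L = "J \<union> K"
  have L: "finite ?L" using loc_finite[OF a] loc_finite[OF b] by simp
  let ?E = "ext ?L w"
  have "act (mmul a b) g w = (\<Sum>v\<in>?E. mmul a b w v * g v)"
    by (rule act_eq[OF loc_mmul[OF a b] _ L]) auto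
  also have "\<dots> = (\<Sum>v\<in>?E. (\<Sum>x\<in>?E. a w x * b x v) * g v)"
    by (rule sum.cong[OF refl], subst mmul_eq[OF a _ L]) auto
  also have "\<dots> = (\<Sum>v\<in>?E. \<Sum>x\<in>?E. a w x * (b x v * g v))"
    by (simp add: sum_distrib_right mult.assoc)
  also have "\<dots> = (\<Sum>x\<in>?E. \<Sum>v\<in>?E. a w x * (b x v * g v))"
    by (rule sum.swap)
  also have "\<dots> = (\<Sum>x\<in>?E. a w x * act b g x)"
  proof (rule sum.cong[OF refl])
    fix x assume x: "x \<in> ?E"
    have "act b g x = (\<Sum>v\<in>ext ?L x. b x v * g v)" by (rule act_eq[OF b _ L]) auto
    also have "\<dots> = (\<Sum>v\<in>?E. b x v * g v)" using ext_eq[OF x] by simp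
    finally show "(\<Sum>v\<in>?E. a w x * (b x v * g v)) = a w x * act b g x"
      by (simp add: sum_distrib_left)
  qed
  also have "\<dots> = act a (act b g) w" by (rule act_eq[OF a _ L, symmetric]) auto
  finally show "act (mmul a b) g w = act a (act b g) w" .
qed

lemma mmul_distl:
  assumes a: "loc J a" and b: "loc J b" and c: "loc J c"
  shows "mmul (madd a b) c = madd (mmul a c) (mmul b c)"
proof (intro ext)
  fix w w'
  have L: "finite J" using loc_finite[OF a] .
  show "mmul (madd a b) c w w' = madd (mmul a c) (mmul b c) w w'"
    unfolding mmul_eq[OF loc_madd[OF a b] subset_refl L] mmul_eq[OF a subset_refl L]
      mmul_eq[OF b subset_refl L]
    by (simp add: madd_def ring_distribs sum.distrib)
qed

lemma mmul_distr:
  assumes a: "loc J a" and b: "loc J b" and c: "loc J c"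
  shows "mmul a (madd b c) = madd (mmul a b) (mmul a c)"
proof (intro ext)
  fix w w'
  have L: "finite J" using loc_finite[OF a] .
  show "mmul a (madd b c) w w' = madd (mmul a b) (mmul a c) w w'"
    unfolding madd_def mmul_eq[OF a subset_refl L]
    by (simp add: madd_def ring_distribs sum.distrib)
qed

lemma mmul_scl:
  assumes a: "loc J a"
  shows "mmul (msc k a) b = msc k (mmul a b)"
proof (intro ext)
  fix w w'
  have L: "finite J" using loc_finite[OF a] .
  show "mmul (msc k a) b w w' = msc k (mmul a b) w w'"
    unfolding mmul_eq[OF loc_msc[OF a] subset_refl L] mmul_eq[OF a subset_refl L]
    by (simp add: msc_def sum_distrib_left mult.assoc)
qed

lemma mmul_scr:
  assumes a: "loc J a"
  shows "mmul a (msc k b) = msc k (mmul a b)"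
proof (intro ext)
  fix w w'
  have L: "finite J" using loc_finite[OF a] .
  show "mmul a (msc k b) w w' = msc k (mmul a b) w w'"
    unfolding mmul_eq[OF a subset_refl L] msc_def
    by (simp add: sum_distrib_left mult.assoc mult.left_commute)
qed

lemma mmul_identl:
  assumes a: "loc J a"
  shows "mmul ident a = a"
proof (intro ext)
  fix w w'
  have "{v. (ident w v :: 'a) \<noteq> 0} = (if w \<in> W then {w} else {})" by (auto simp: ident_def)
  then show "mmul ident a w w' = a w w'"
    using locD1[OF a, of w w'] by (auto simp: mmul_def ident_def)
qed

lemma mmul_identr:
  assumes a: "loc J a"
  shows "mmul a ident = a"
proof (intro ext)
  fix w w'
  have L: "finite J" using loc_finite[OF a] .
  have "mmul a ident w w' = (\<Sum>v\<in>ext J w. a w v * ident v w')" by (rule mmul_eq[OF a subset_refl L])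
  also have "\<dots> = (\<Sum>v\<in>ext J w. if v = w' then a w w' else 0)"
    by (rule sum.cong[OF refl]) (auto simp: ident_def ext_def)
  also have "\<dots> = (if w' \<in> ext J w then a w w' else 0)"
    using finite_ext[OF L] by (simp add: sum.delta')
  also have "\<dots> = a w w'" using locD1[OF a, of w w'] by (auto simp: ext_def)
  finally show "mmul a ident w w' = a w w'" .
qed

lemma act_ident: "act ident g w = (if w \<in> W then g w else 0)"
proof -
  have "{v. (ident w v :: 'a) \<noteq> 0} = (if w \<in> W then {w} else {})" by (auto simp: ident_def)
  then show ?thesis by (auto simp: act_def ident_def)
qed

lemma act_madd:
  assumes a: "loc J a" and b: "loc J b"
  shows "act (madd a b) g w = act a g w + act b g w"
proof -
  have L: "finite J" using loc_finite[OF a] .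
  show ?thesis unfolding act_eq[OF loc_madd[OF a b] subset_refl L] act_eq[OF a subset_refl L]
      act_eq[OF b subset_refl L]
    by (simp add: madd_def ring_distribs sum.distrib)
qed

lemma act_zero: "act (\<lambda>w w'. 0) g w = 0"
  by (simp add: act_def)

lemma act_lin_add: "act a (\<lambda>x. g x + h x) w = act a g w + act a h w"
  by (simp add: act_def ring_distribs sum.distrib)

lemma act_lin_sc: "act a (\<lambda>x. c * g x) w = c * act a g w"
  by (simp add: act_def sum_distrib_left mult.left_commute)

end

definition supp :: "('i \<Rightarrow> nat \<times> nat) \<Rightarrow> 'i set" where
  "supp u = {i. u i \<noteq> (0,0)}"

definition bt :: "nat \<times> nat \<Rightarrow> nat \<Rightarrow> nat \<Rightarrow> 'a::field" where
  "bt c s t = (if c = (0,0) then (if s = t then 1 else 0) else if c = (s,t) then 1 else 0)"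

definition lam :: "nat \<times> nat \<Rightarrow> nat \<times> nat \<Rightarrow> 'a::field" where
  "lam p c = (if p \<noteq> (0,0) then (if c = p then 1 else 0)
     else (if c = (0,0) then 1 else if fst c = snd c then -1 else 0))"

lemma site_sum:
  assumes "s < D" "t < D" "x < D" "y < D"
  shows "(\<Sum>c\<in>{..<D}\<times>{..<D}. lam (x,y) c * bt c s t) = (if s = x \<and> t = y then (1::'a::field) else 0)"
proof -
  let ?P = "{..<D}\<times>{..<D}"
  have fin: "finite ?P" by simp
  have z: "(0,0) \<in> ?P" using assms by auto
  have st: "(s,t) \<in> ?P" using assms by auto
  let ?K = "lam (x,y) (0,0) * (if s = t then 1 else 0) :: 'a"
  let ?L = "if (s,t) \<noteq> (0,0) then lam (x,y) (s,t) else 0 :: 'a"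
  have "(\<Sum>c\<in>?P. lam (x,y) c * bt c s t) =
        (\<Sum>c\<in>?P. (if c = (0,0) then ?K else 0) + (if c = (s,t) then ?L else 0))"
  proof (rule sum.cong[OF refl])
    fix c :: "nat \<times> nat"
    show "lam (x,y) c * bt c s t = (if c = (0,0) then ?K else 0) + (if c = (s,t) then ?L else 0)"
      unfolding bt_def by (cases "c = (0,0)"; cases "c = (s,t)") auto
  qed
  also have "\<dots> = (\<Sum>c\<in>?P. (if c = (0,0) then ?K else 0)) + (\<Sum>c\<in>?P. (if c = (s,t) then ?L else 0))"
    by (rule sum.distrib)
  also have "\<dots> = ?K + ?L"
    using fin z st by (simp only: sum.delta if_True)
  also have "\<dots> = (if s = x \<and> t = y then 1 else 0)"
    by (auto simp: lam_def)
  finally show ?thesis .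
qed

context tens
begin

definition U :: "('i \<Rightarrow> nat \<times> nat) set" where
  "U = {u. finite {i. u i \<noteq> (0,0)} \<and> (\<forall>i. fst (u i) < d i \<and> snd (u i) < d i)}"

definition Bu :: "('i \<Rightarrow> nat \<times> nat) \<Rightarrow> ('i \<Rightarrow> nat) \<Rightarrow> ('i \<Rightarrow> nat) \<Rightarrow> 'a::field" where
  "Bu u = (\<lambda>w w'. if w \<in> W \<and> w' \<in> W \<and> offeq (supp u) w w' then \<Prod>i\<in>supp u. bt (u i) (w i) (w' i) else 0)"

definition fsU :: "(('i \<Rightarrow> nat \<times> nat) \<Rightarrow> 'a::field) set" where
  "fsU = {f. finite {u. f u \<noteq> 0} \<and> (\<forall>u. f u \<noteq> 0 \<longrightarrow> u \<in> U)}"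

definition Phi :: "(('i \<Rightarrow> nat \<times> nat) \<Rightarrow> 'a::field) \<Rightarrow> ('i \<Rightarrow> nat) \<Rightarrow> ('i \<Rightarrow> nat) \<Rightarrow> 'a" where
  "Phi f = (\<lambda>w w'. \<Sum>u\<in>{u. f u \<noteq> 0}. f u * Bu u w w')"

lemma finite_supp: "u \<in> U \<Longrightarrow> finite (supp u)"
  by (simp add: U_def supp_def)

lemma loc_Bu: "u \<in> U \<Longrightarrow> loc (supp u) (Bu u)"
proof (rule loc_intro)
  assume "u \<in> U" then show "finite (supp u)" by (rule finite_supp)
next
  fix w v assume "(Bu u w v :: 'a) \<noteq> 0"
  then show "w \<in> W \<and> v \<in> W \<and> offeq (supp u) w v" by (auto simp: Bu_def split: if_splits)
next
  fix w w' v v' assume h: "w \<in> W" "w' \<in> W" "v \<in> W" "v' \<in> W" "offeq (supp u) w w'" "offeq (supp u) v v'"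
    "\<And>i. i \<in> supp u \<Longrightarrow> w i = v i \<and> w' i = v' i"
  have "(\<Prod>i\<in>supp u. bt (u i) (w i) (w' i)) = (\<Prod>i\<in>supp u. (bt (u i) (v i) (v' i) :: 'a))"
    by (rule prod.cong[OF refl]) (simp add: h(7))
  then show "(Bu u w w' :: 'a) = Bu u v v'" using h by (simp add: Bu_def)
qed

lemma Phi_eq:
  assumes "finite S" "{u. f u \<noteq> 0} \<subseteq> S"
  shows "Phi f = (\<lambda>w w'. \<Sum>u\<in>S. f u * Bu u w w')"
  unfolding Phi_def
  by (intro ext sum.mono_neutral_left[OF assms]) auto

definition Jf :: "(('i \<Rightarrow> nat \<times> nat) \<Rightarrow> 'a::field) \<Rightarrow> 'i set" where
  "Jf f = (\<Union>u\<in>{u. f u \<noteq> 0}. supp u)"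

lemma finite_Jf: assumes f: "f \<in> fsU" shows "finite (Jf f)"
proof -
  have 1: "finite {u. f u \<noteq> 0}" using f by (simp add: fsU_def)
  have 2: "\<And>u. u \<in> {u. f u \<noteq> 0} \<Longrightarrow> finite (supp u)" using f finite_supp by (simp add: fsU_def)
  show ?thesis unfolding Jf_def using finite_UN_I[OF 1 2] .
qed

lemma loc_Phi: 
  assumes f: "f \<in> fsU" and J: "Jf f \<subseteq> J" "finite J"
  shows "loc J (Phi f)"
  unfolding Phi_def
proof (rule loc_sum)
  show "finite {u. f u \<noteq> 0}" using f by (simp add: fsU_def)
  show "finite J" by fact
  fix u assume u: "u \<in> {u. f u \<noteq> 0}"
  then have uU: "u \<in> U" using f by (simp add: fsU_def)
  have "supp u \<subseteq> J" using u J unfolding Jf_def by auto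
  then have "loc J (Bu u)" using loc_mono[OF loc_Bu[OF uU]] J(2) by blast
  from loc_msc[OF this, of "f u"] show "loc J (\<lambda>w w'. f u * Bu u w w')" by (simp add: msc_def)
qed

lemma fsU_add: "f \<in> fsU \<Longrightarrow> g \<in> fsU \<Longrightarrow> (\<lambda>u. f u + g u) \<in> fsU"
proof -
  assume f: "f \<in> fsU" and g: "g \<in> fsU"
  have "{u. f u + g u \<noteq> 0} \<subseteq> {u. f u \<noteq> 0} \<union> {u. g u \<noteq> 0}" by auto
  moreover have "finite ({u. f u \<noteq> 0} \<union> {u. g u \<noteq> 0})" using f g by (simp add: fsU_def)
  ultimately have "finite {u. f u + g u \<noteq> 0}" by (rule finite_subset)
  moreover have "\<forall>u. f u + g u \<noteq> 0 \<longrightarrow> u \<in> U"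
  proof (intro allI impI)
    fix u assume "f u + g u \<noteq> 0"
    then have "f u \<noteq> 0 \<or> g u \<noteq> 0" by auto
    then show "u \<in> U" using f g by (auto simp: fsU_def)
  qed
  ultimately show ?thesis by (simp add: fsU_def)
qed

lemma fsU_sc: "f \<in> fsU \<Longrightarrow> (\<lambda>u. c * f u) \<in> fsU"
proof -
  assume f: "f \<in> fsU"
  have "{u. c * f u \<noteq> 0} \<subseteq> {u. f u \<noteq> 0}" by auto
  moreover have "finite {u. f u \<noteq> 0}" using f by (simp add: fsU_def)
  ultimately have "finite {u. c * f u \<noteq> 0}" by (rule finite_subset)
  then show ?thesis using f unfolding fsU_def by auto
qed

lemma fsU_zero: "(\<lambda>u. 0) \<in> fsU" by (simp add: fsU_def)

lemma Phi_add:
  assumes f: "f \<in> fsU" and g: "g \<in> fsU"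
  shows "Phi (\<lambda>u. f u + g u) = madd (Phi f) (Phi g)"
proof -
  let ?S = "{u. f u \<noteq> 0} \<union> {u. g u \<noteq> 0}"
  have fin: "finite ?S" using f g by (simp add: fsU_def)
  have s1: "{u. f u \<noteq> 0} \<subseteq> ?S" and s2: "{u. g u \<noteq> 0} \<subseteq> ?S"
    and s3: "{u. f u + g u \<noteq> 0} \<subseteq> ?S" by auto
  show ?thesis
    unfolding Phi_eq[OF fin s1] Phi_eq[OF fin s2] Phi_eq[OF fin s3]
    by (simp add: madd_def ring_distribs sum.distrib)
qed

lemma Phi_sc:
  assumes f: "f \<in> fsU"
  shows "Phi (\<lambda>u. c * f u) = msc c (Phi f)"
proof -
  let ?S = "{u. f u \<noteq> 0}"
  have fin: "finite ?S" using f by (simp add: fsU_def)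
  have s1: "{u. f u \<noteq> 0} \<subseteq> ?S" and s3: "{u. c * f u \<noteq> 0} \<subseteq> ?S" by auto
  show ?thesis
    unfolding Phi_eq[OF fin s1] Phi_eq[OF fin s3]
    by (simp add: msc_def sum_distrib_left mult.assoc)
qed

lemma Phi_zero: "Phi (\<lambda>u. 0) = (\<lambda>w w'. 0)"
  by (simp add: Phi_def)

lemma Phi_sum:
  assumes "finite P" "\<And>p. p \<in> P \<Longrightarrow> g p \<in> fsU"
  shows "(\<lambda>u. \<Sum>p\<in>P. g p u) \<in> fsU \<and> Phi (\<lambda>u. \<Sum>p\<in>P. g p u) = (\<lambda>w w'. \<Sum>p\<in>P. Phi (g p) w w')"
  using assms
proof (induction P rule: finite_induct)
  case empty
  then show ?case using fsU_zero Phi_zero by simp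
next
  case (insert p P)
  have g: "g p \<in> fsU" using insert by simp
  have IH: "(\<lambda>u. \<Sum>p\<in>P. g p u) \<in> fsU" "Phi (\<lambda>u. \<Sum>p\<in>P. g p u) = (\<lambda>w w'. \<Sum>p\<in>P. Phi (g p) w w')"
    using insert by auto
  have e: "(\<lambda>u. \<Sum>p\<in>insert p P. g p u) = (\<lambda>u. g p u + (\<Sum>p\<in>P. g p u))"
    using insert by simp
  show ?case unfolding e using fsU_add[OF g IH(1)] Phi_add[OF g IH(1)] IH(2) insert
    by (simp add: madd_def)
qed

lemma Phi_inj0:
  assumes f: "f \<in> fsU" and z: "Phi f = (\<lambda>w w'. 0)"
  shows "f = (\<lambda>u. 0)"
proof (rule ccontr)
  assume "f \<noteq> (\<lambda>u. 0)"
  then obtain u0 where "f u0 \<noteq> 0" by auto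
  then obtain u where u: "f u \<noteq> 0" and umin: "\<And>v. f v \<noteq> 0 \<Longrightarrow> card (supp u) \<le> card (supp v)"
    using ex_has_least_nat[of "\<lambda>u. f u \<noteq> 0" u0 "\<lambda>u. card (supp u)"] by blast
  let ?S = "{u. f u \<noteq> 0}"
  have fin: "finite ?S" and SU: "\<And>v. v \<in> ?S \<Longrightarrow> v \<in> U" using f by (auto simp: fsU_def)
  have uU: "u \<in> U" using SU u by simp
  define wl where "wl = (\<lambda>i. fst (u i))"
  define wr where "wr = (\<lambda>i. snd (u i))"
  have wlW: "wl \<in> W"
  proof -
    have "{i. wl i \<noteq> 0} \<subseteq> supp u" by (auto simp: wl_def supp_def)
    then have "finite {i. wl i \<noteq> 0}" using finite_supp[OF uU] by (rule finite_subset)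
    moreover have "\<forall>i. wl i < d i" using uU by (simp add: U_def wl_def)
    ultimately show ?thesis by (simp add: W_def)
  qed
  have wrW: "wr \<in> W"
  proof -
    have "{i. wr i \<noteq> 0} \<subseteq> supp u" by (auto simp: wr_def supp_def)
    then have "finite {i. wr i \<noteq> 0}" using finite_supp[OF uU] by (rule finite_subset)
    moreover have "\<forall>i. wr i < d i" using uU by (simp add: U_def wr_def)
    ultimately show ?thesis by (simp add: W_def)
  qed
  have oe: "offeq (supp u) wl wr" by (auto simp: offeq_def supp_def wl_def wr_def)
  have Bu1: "(Bu u wl wr :: 'a) = 1"
  proof -
    have "(\<Prod>i\<in>supp u. bt (u i) (wl i) (wr i)) = (\<Prod>i\<in>supp u. (1::'a))"
      by (rule prod.cong[OF refl]) (auto simp: bt_def wl_def wr_def supp_def)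
    then show ?thesis using wlW wrW oe by (simp add: Bu_def)
  qed
  have Bu0: "(Bu v wl wr :: 'a) = 0" if v: "v \<in> ?S" "v \<noteq> u" for v
  proof (rule ccontr)
    assume nz: "(Bu v wl wr :: 'a) \<noteq> 0"
    have vU: "v \<in> U" using SU v by simp
    have Bd: "(Bu v wl wr :: 'a) = (if wl \<in> W \<and> wr \<in> W \<and> offeq (supp v) wl wr
        then \<Prod>i\<in>supp v. bt (v i) (wl i) (wr i) else 0)" by (simp only: Bu_def)
    have pnz: "(\<Prod>i\<in>supp v. (bt (v i) (wl i) (wr i) :: 'a)) \<noteq> 0"
    proof
      assume "(\<Prod>i\<in>supp v. (bt (v i) (wl i) (wr i) :: 'a)) = 0"
      then have "(Bu v wl wr :: 'a) = 0" unfolding Bd by simp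
      then show False using nz by simp
    qed
    have veq: "v i = u i" if i: "i \<in> supp v" for i
    proof -
      have b: "(bt (v i) (wl i) (wr i) :: 'a) \<noteq> 0"
        using pnz prod_zero_iff[OF finite_supp[OF vU]] i by blast
      have nz0: "v i \<noteq> (0,0)" using i by (simp add: supp_def)
      have "v i = (wl i, wr i)"
      proof (rule ccontr)
        assume "v i \<noteq> (wl i, wr i)"
        then have "(bt (v i) (wl i) (wr i) :: 'a) = 0" using nz0 by (simp add: bt_def)
        then show False using b by simp
      qed
      then show ?thesis by (simp add: wl_def wr_def)
    qed
    have sub: "supp v \<subseteq> supp u"
    proof
      fix i assume i: "i \<in> supp v"
      then have "v i \<noteq> (0,0)" by (simp add: supp_def)
      then show "i \<in> supp u" using veq[OF i] by (simp add: supp_def)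
    qed
    have fv: "f v \<noteq> 0" using v(1) by simp
    have c1: "card (supp u) \<le> card (supp v)" by (rule umin[OF fv])
    have c2: "card (supp v) \<le> card (supp u)" by (rule card_mono[OF finite_supp[OF uU] sub])
    have "card (supp v) = card (supp u)" using antisym[OF c2 c1] .
    then have "supp v = supp u" by (rule card_subset_eq[OF finite_supp[OF uU] sub])
    have "v i = u i" for i
    proof (cases "i \<in> supp v")
      case True then show ?thesis using veq by blast
    next
      case False
      then have "i \<notin> supp u" using \<open>supp v = supp u\<close> by simp
      then show ?thesis using False by (simp add: supp_def)
    qed
    then have "v = u" by (simp add: fun_eq_iff)
    then show False using v by simp
  qed
  have "Phi f wl wr = (\<Sum>v\<in>?S. f v * Bu v wl wr)" by (simp add: Phi_def)
  also have "\<dots> = (\<Sum>v\<in>?S. if v = u then f u else 0)"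
    by (rule sum.cong[OF refl]) (auto simp: Bu1 Bu0)
  also have "\<dots> = f u" using fin u by (simp add: sum.delta')
  finally show False using z u by simp
qed

lemma Phi_inj:
  assumes f: "f \<in> fsU" and g: "g \<in> fsU" and e: "Phi f = Phi g"
  shows "f = g"
proof -
  have h: "(\<lambda>u. f u + (-1) * g u) \<in> fsU" using fsU_add[OF f fsU_sc[OF g]] .
  have "Phi (\<lambda>u. f u + (-1) * g u) = madd (Phi f) (Phi (\<lambda>u. (-1) * g u))"
    by (rule Phi_add[OF f fsU_sc[OF g]])
  also have "\<dots> = madd (Phi f) (msc (-1) (Phi g))" by (simp only: Phi_sc[OF g])
  also have "\<dots> = (\<lambda>w w'. 0)" unfolding e by (simp add: madd_def msc_def)
  finally have "Phi (\<lambda>u. f u + (-1) * g u) = (\<lambda>w w'. 0)" .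
  then have "(\<lambda>u. f u + (-1) * g u) = (\<lambda>u. 0)" using Phi_inj0[OF h] by blast
  then have "\<And>u. f u - g u = 0" by (simp add: fun_eq_iff)
  then show ?thesis by (simp add: fun_eq_iff)
qed

lemma Phi_ident: "Phi (\<lambda>u. if u = (\<lambda>i. (0,0)) then 1 else 0) = ident"
proof -
  have "(\<lambda>i. (0::nat,0::nat)) \<in> U" using d_pos by (simp add: U_def)
  have s: "{u. (if u = (\<lambda>i. (0::nat,0::nat)) then 1 else 0::'a) \<noteq> 0} = {\<lambda>i. (0,0)}" by auto
  have "supp (\<lambda>i::'i. (0::nat,0::nat)) = {}" by (simp add: supp_def)
  then show ?thesis unfolding Phi_def s
  proof (intro ext)
    fix w w' :: "'i \<Rightarrow> nat"
    assume sp: "supp (\<lambda>i::'i. (0::nat,0::nat)) = {}"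
    have "offeq {} w w' \<longleftrightarrow> w = w'" by (auto simp: offeq_def fun_eq_iff)
    then show "(\<Sum>u\<in>{\<lambda>i. (0, 0)}. (if u = (\<lambda>i. (0, 0)) then 1 else 0) * Bu u w w') = (ident w w' :: 'a)"
      using sp by (auto simp: Bu_def ident_def)
  qed
qed

end

lemma prod_indicator:
  assumes "finite J"
  shows "(\<Prod>i\<in>J. (if P i then 1 else 0 :: 'a::field)) = (if \<forall>i\<in>J. P i then 1 else 0)"
proof (cases "\<forall>i\<in>J. P i")
  case True
  then show ?thesis by (simp add: prod.neutral)
next
  case False
  then obtain i where "i \<in> J" "\<not> P i" by blast
  then show ?thesis using assms False by (subst prod_zero) auto
qed

context tens
begin

definition UJ :: "'i set \<Rightarrow> ('i \<Rightarrow> nat \<times> nat) set" where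
  "UJ J = {u. (\<forall>i\<in>J. fst (u i) < d i \<and> snd (u i) < d i) \<and> (\<forall>i. i \<notin> J \<longrightarrow> u i = (0,0))}"

definition Pairs :: "'i \<Rightarrow> (nat \<times> nat) set" where
  "Pairs i = {..<d i} \<times> {..<d i}"

definition fxy :: "'i set \<Rightarrow> ('i \<Rightarrow> nat) \<Rightarrow> ('i \<Rightarrow> nat) \<Rightarrow> ('i \<Rightarrow> nat \<times> nat) \<Rightarrow> 'a::field" where
  "fxy J x y = (\<lambda>u. if u \<in> UJ J then \<Prod>i\<in>J. lam (x i, y i) (u i) else 0)"

definition Exy :: "'i set \<Rightarrow> ('i \<Rightarrow> nat) \<Rightarrow> ('i \<Rightarrow> nat) \<Rightarrow> ('i \<Rightarrow> nat) \<Rightarrow> ('i \<Rightarrow> nat) \<Rightarrow> 'a::field" where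
  "Exy J x y = (\<lambda>w w'. if w \<in> W \<and> w' \<in> W \<and> offeq J w w' \<and> restrict w J = x \<and> restrict w' J = y then 1 else 0)"

lemma supp_UJ: "u \<in> UJ J \<Longrightarrow> supp u \<subseteq> J"
  by (auto simp: UJ_def supp_def)

lemma UJ_sub:
  assumes "finite J" shows "UJ J \<subseteq> U"
proof
  fix u assume u: "u \<in> UJ J"
  have "{i. u i \<noteq> (0,0)} \<subseteq> J" using supp_UJ[OF u] by (simp add: supp_def)
  then have "finite {i. u i \<noteq> (0,0)}" using assms by (rule finite_subset)
  moreover have "\<forall>i. fst (u i) < d i \<and> snd (u i) < d i"
  proof
    fix i show "fst (u i) < d i \<and> snd (u i) < d i"
    proof (cases "i \<in> J")
      case True then show ?thesis using u by (simp add: UJ_def)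
    next
      case False then have "u i = (0,0)" using u by (simp add: UJ_def)
      then show ?thesis using d_pos[of i] by simp
    qed
  qed
  ultimately show "u \<in> U" by (simp add: U_def)
qed

lemma bij_UJ: "bij_betw (\<lambda>u. restrict u J) (UJ J) (PiE J Pairs)"
proof (rule bij_betw_byWitness[where f' = "\<lambda>p i. if i \<in> J then p i else (0,0)"])
  show "\<forall>a\<in>UJ J. (\<lambda>i. if i \<in> J then restrict a J i else (0, 0)) = a"
  proof
    fix a assume "a \<in> UJ J"
    then have "\<forall>i. i \<notin> J \<longrightarrow> a i = (0,0)" by (simp add: UJ_def)
    then show "(\<lambda>i. if i \<in> J then restrict a J i else (0, 0)) = a" by (simp add: fun_eq_iff)
  qed
  show "\<forall>a'\<in>PiE J Pairs. restrict (\<lambda>i. if i \<in> J then a' i else (0, 0)) J = a'"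
  proof
    fix a' assume "a' \<in> PiE J Pairs"
    then show "restrict (\<lambda>i. if i \<in> J then a' i else (0, 0)) J = a'"
      by (simp add: restrict_def fun_eq_iff PiE_def extensional_def)
  qed
  show "(\<lambda>u. restrict u J) ` UJ J \<subseteq> PiE J Pairs"
  proof
    fix p assume "p \<in> (\<lambda>u. restrict u J) ` UJ J"
    then obtain u where u: "u \<in> UJ J" "p = restrict u J" by blast
    have "\<forall>i\<in>J. u i \<in> Pairs i" using u(1) unfolding UJ_def Pairs_def by (simp add: mem_Times_iff)
    then show "p \<in> PiE J Pairs" using u(2) by simp
  qed
  show "(\<lambda>p i. if i \<in> J then p i else (0, 0)) ` PiE J Pairs \<subseteq> UJ J"
  proof
    fix u assume "u \<in> (\<lambda>p i. if i \<in> J then p i else (0, 0)) ` PiE J Pairs"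
    then obtain p where p: "p \<in> PiE J Pairs" "u = (\<lambda>i. if i \<in> J then p i else (0, 0))" by blast
    have "\<forall>i\<in>J. p i \<in> Pairs i" using p(1) by (simp add: PiE_def Pi_def)
    then have "\<forall>i\<in>J. fst (u i) < d i \<and> snd (u i) < d i" using p(2) by (simp add: Pairs_def mem_Times_iff)
    moreover have "\<forall>i. i \<notin> J \<longrightarrow> u i = (0,0)" using p(2) by simp
    ultimately show "u \<in> UJ J" by (simp add: UJ_def)
  qed
qed

lemma finite_UJ: "finite J \<Longrightarrow> finite (UJ J)"
proof -
  assume J: "finite J"
  have "finite (PiE J Pairs)" using J by (intro finite_PiE) (simp_all add: Pairs_def)
  then show ?thesis using bij_betw_finite[OF bij_UJ[of J]] by simp
qed

lemma fxy_fsU: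
  assumes "finite J" shows "fxy J x y \<in> fsU"
proof -
  have s: "{u. (fxy J x y u :: 'a) \<noteq> 0} \<subseteq> UJ J" by (auto simp: fxy_def split: if_splits)
  have "finite {u. (fxy J x y u :: 'a) \<noteq> 0}" using finite_subset[OF s finite_UJ[OF assms]] .
  moreover have "\<forall>u. (fxy J x y u :: 'a) \<noteq> 0 \<longrightarrow> u \<in> U" using s UJ_sub[OF assms] by blast
  ultimately show ?thesis by (simp add: fsU_def)
qed

lemma Bu_UJ:
  assumes J: "finite J" and u: "u \<in> UJ J"
  shows "(Bu u w w' :: 'a::field) = (if w \<in> W \<and> w' \<in> W \<and> offeq J w w' then \<Prod>i\<in>J. bt (u i) (w i) (w' i) else 0)"
proof -
  have sJ: "supp u \<subseteq> J" using supp_UJ[OF u] .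
  have z: "\<And>i. i \<in> J - supp u \<Longrightarrow> u i = (0,0)" by (simp add: supp_def)
  show ?thesis
  proof (cases "w \<in> W \<and> w' \<in> W \<and> offeq J w w'")
    case False
    then have nc: "\<not> (w \<in> W \<and> w' \<in> W \<and> offeq (supp u) w w')" using offeq_mono[OF _ sJ] by blast
    show ?thesis by (simp only: Bu_def if_not_P[OF nc] if_not_P[OF False])
  next
    case True
    have "(\<Prod>i\<in>J. (bt (u i) (w i) (w' i) :: 'a)) =
      (\<Prod>i\<in>J - supp u. bt (u i) (w i) (w' i)) * (\<Prod>i\<in>supp u. bt (u i) (w i) (w' i))"
      by (rule prod.subset_diff[OF sJ J])
    also have "(\<Prod>i\<in>J - supp u. (bt (u i) (w i) (w' i) :: 'a)) = (\<Prod>i\<in>J - supp u. if w i = w' i then 1 else 0)"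
      by (rule prod.cong[OF refl]) (simp add: z bt_def)
    also have "\<dots> = (if \<forall>i\<in>J - supp u. w i = w' i then 1 else 0)"
      using J by (simp add: prod_indicator)
    finally have e: "(\<Prod>i\<in>J. (bt (u i) (w i) (w' i) :: 'a)) =
       (if \<forall>i\<in>J - supp u. w i = w' i then 1 else 0) * (\<Prod>i\<in>supp u. bt (u i) (w i) (w' i))" .
    have "offeq (supp u) w w' \<longleftrightarrow> (\<forall>i\<in>J - supp u. w i = w' i)"
      using True by (auto simp: offeq_def)
    then show ?thesis using True e by (simp add: Bu_def)
  qed
qed

lemma restrict_eq_iff:
  assumes "x \<in> PiE J A"
  shows "restrict w J = x \<longleftrightarrow> (\<forall>i\<in>J. w i = x i)"
  using assms by (auto simp: fun_eq_iff PiE_def extensional_def)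

lemma Phi_fxy:
  assumes J: "finite J" and x: "x \<in> Pd J" and y: "y \<in> Pd J"
  shows "Phi (fxy J x y) = (Exy J x y :: _ \<Rightarrow> _ \<Rightarrow> 'a::field)"
proof (intro ext)
  fix w w'
  have sub: "{u. (fxy J x y u :: 'a) \<noteq> 0} \<subseteq> UJ J" by (auto simp: fxy_def split: if_splits)
  have "Phi (fxy J x y) w w' = (\<Sum>u\<in>UJ J. (fxy J x y u :: 'a) * Bu u w w')"
    by (simp add: Phi_eq[OF finite_UJ[OF J] sub])
  also have "\<dots> = Exy J x y w w'"
  proof (cases "w \<in> W \<and> w' \<in> W \<and> offeq J w w'")
    case False
    have "(\<Sum>u\<in>UJ J. (fxy J x y u :: 'a) * Bu u w w') = 0"
      by (rule sum.neutral) (simp add: Bu_UJ[OF J] if_not_P[OF False])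
    moreover have "(Exy J x y w w' :: 'a) = 0" using False by (auto simp: Exy_def)
    ultimately show ?thesis by simp
  next
    case True
    then have wW: "w \<in> W" "w' \<in> W" by auto
    have "(\<Sum>u\<in>UJ J. (fxy J x y u :: 'a) * Bu u w w') =
          (\<Sum>u\<in>UJ J. \<Prod>i\<in>J. lam (x i, y i) (restrict u J i) * bt (restrict u J i) (w i) (w' i))"
      by (rule sum.cong[OF refl]) (simp add: Bu_UJ[OF J] True fxy_def prod.distrib)
    also have "\<dots> = (\<Sum>p\<in>PiE J Pairs. \<Prod>i\<in>J. lam (x i, y i) (p i) * bt (p i) (w i) (w' i))"
      by (rule sum.reindex_bij_betw[OF bij_UJ])
    also have "\<dots> = (\<Prod>i\<in>J. \<Sum>c\<in>Pairs i. lam (x i, y i) c * bt c (w i) (w' i))"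
      by (rule prod_sum_PiE[symmetric]) (simp_all add: J Pairs_def)
    also have "\<dots> = (\<Prod>i\<in>J. if w i = x i \<and> w' i = y i then 1 else 0)"
    proof (rule prod.cong[OF refl])
      fix i assume i: "i \<in> J"
      have "w i < d i" "w' i < d i" using wW by (auto simp: W_def)
      moreover have "x i < d i" "y i < d i" using x y i by (auto simp: Pd_def)
      ultimately show "(\<Sum>c\<in>Pairs i. lam (x i, y i) c * bt c (w i) (w' i)) = (if w i = x i \<and> w' i = y i then 1 else (0::'a))"
        unfolding Pairs_def by (rule site_sum)
    qed
    also have "\<dots> = (if \<forall>i\<in>J. w i = x i \<and> w' i = y i then 1 else 0)"
      using J by (rule prod_indicator)
    also have "\<dots> = Exy J x y w w'"
      using True restrict_eq_iff[OF x[unfolded Pd_def], of w] restrict_eq_iff[OF y[unfolded Pd_def], of w']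
      by (auto simp: Exy_def)
    finally show ?thesis .
  qed
  finally show "Phi (fxy J x y) w w' = (Exy J x y w w' :: 'a)" .
qed

definition lift :: "'i set \<Rightarrow> ('i \<Rightarrow> nat) \<Rightarrow> ('i \<Rightarrow> nat)" where
  "lift J x = shift J (\<lambda>_. 0) x"

lemma lift_W: "finite J \<Longrightarrow> x \<in> Pd J \<Longrightarrow> lift J x \<in> W"
  unfolding lift_def by (rule shift_W) (auto simp: zero_W Pd_def)

lemma decomp:
  assumes a: "loc J a"
  shows "a = (\<lambda>w w'. \<Sum>p\<in>Pd J \<times> Pd J. a (lift J (fst p)) (lift J (snd p)) * Exy J (fst p) (snd p) w w')"
proof (intro ext)
  fix w w'
  have J: "finite J" using loc_finite[OF a] .
  show "a w w' = (\<Sum>p\<in>Pd J \<times> Pd J. a (lift J (fst p)) (lift J (snd p)) * Exy J (fst p) (snd p) w w')"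
  proof (cases "w \<in> W \<and> w' \<in> W \<and> offeq J w w'")
    case False
    then have "a w w' = 0" using locD1[OF a, of w w'] by blast
    moreover have "\<And>x y. (Exy J x y w w' :: 'a) = 0" using False by (auto simp: Exy_def)
    ultimately show ?thesis by simp
  next
    case True
    let ?p = "(restrict w J, restrict w' J)"
    have pin: "?p \<in> Pd J \<times> Pd J" using True by (auto simp: Pd_def W_def)
    have "(\<Sum>p\<in>Pd J \<times> Pd J. a (lift J (fst p)) (lift J (snd p)) * Exy J (fst p) (snd p) w w') =
          (\<Sum>p\<in>Pd J \<times> Pd J. if p = ?p then a (lift J (fst ?p)) (lift J (snd ?p)) else 0)"
      by (rule sum.cong[OF refl]) (auto simp: Exy_def True)
    also have "\<dots> = a (lift J (fst ?p)) (lift J (snd ?p))"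
      using pin J by (simp add: sum.delta finite_Pd)
    also have "\<dots> = a w w'"
    proof (rule sym, rule locD2[OF a])
      show "w \<in> W" "w' \<in> W" "offeq J w w'" using True by auto
      show "lift J (fst ?p) \<in> W" "lift J (snd ?p) \<in> W" using lift_W[OF J] pin by auto
      show "offeq J (lift J (fst ?p)) (lift J (snd ?p))" by (simp add: offeq_def lift_def shift_def)
      show "\<And>i. i \<in> J \<Longrightarrow> w i = lift J (fst ?p) i \<and> w' i = lift J (snd ?p) i"
        by (simp add: lift_def shift_def)
    qed
    finally show ?thesis by simp
  qed
qed

lemma Phi_surj:
  assumes a: "loc J a"
  shows "\<exists>f\<in>fsU. Phi f = a"
proof -
  have J: "finite J" using loc_finite[OF a] .
  let ?P = "Pd J \<times> Pd J"
  define c where "c p = a (lift J (fst p)) (lift J (snd p))" for p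
  define g where "g p = (\<lambda>u. c p * fxy J (fst p) (snd p) u)" for p
  have fin: "finite ?P" using finite_Pd[OF J] by simp
  have g: "\<And>p. p \<in> ?P \<Longrightarrow> g p \<in> fsU" unfolding g_def using fsU_sc[OF fxy_fsU[OF J]] by blast
  have Pg: "Phi (g p) = msc (c p) (Exy J (fst p) (snd p))" if p: "p \<in> ?P" for p
  proof -
    have 1: "Phi (g p) = msc (c p) (Phi (fxy J (fst p) (snd p)))" unfolding g_def
      by (rule Phi_sc[OF fxy_fsU[OF J]])
    have 2: "Phi (fxy J (fst p) (snd p)) = (Exy J (fst p) (snd p) :: _ \<Rightarrow> _ \<Rightarrow> 'a)"
      using p by (intro Phi_fxy[OF J]) (auto simp: mem_Times_iff)
    show ?thesis using 1 unfolding 2 .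
  qed
  from Phi_sum[OF fin g]
  have 1: "(\<lambda>u. \<Sum>p\<in>?P. g p u) \<in> fsU" and 2: "Phi (\<lambda>u. \<Sum>p\<in>?P. g p u) = (\<lambda>w w'. \<Sum>p\<in>?P. Phi (g p) w w')"
    by auto
  have "(\<lambda>w w'. \<Sum>p\<in>?P. Phi (g p) w w') = (\<lambda>w w'. \<Sum>p\<in>?P. c p * Exy J (fst p) (snd p) w w')"
    by (intro ext sum.cong[OF refl]) (simp add: Pg msc_def)
  also have "\<dots> = a" unfolding c_def by (rule decomp[OF a, symmetric])
  finally show ?thesis using 1 2 by auto
qed

end

lemma mat_mult_entry:
  assumes "A \<in> carrier_mat n n" "B \<in> carrier_mat n n" "i < n" "j < n"
  shows "(A * B) $$ (i,j) = (\<Sum>k\<in>{0..<n}. A $$ (i,k) * B $$ (k,j))"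
  using assms by (simp add: scalar_prod_def)

context tens
begin

definition enc :: "'i set \<Rightarrow> ('i \<Rightarrow> nat) \<Rightarrow> nat" where
  "enc J = (SOME h. bij_betw h (Pd J) {0..<card (Pd J)})"

definition dec :: "'i set \<Rightarrow> nat \<Rightarrow> ('i \<Rightarrow> nat)" where
  "dec J = inv_into (Pd J) (enc J)"

lemma enc_bij: assumes "finite J" shows "bij_betw (enc J) (Pd J) {0..<card (Pd J)}"
  unfolding enc_def using someI_ex[OF ex_bij_betw_finite_nat[OF finite_Pd[OF assms]]] .

lemma dec_bij: "finite J \<Longrightarrow> bij_betw (dec J) {0..<card (Pd J)} (Pd J)"
  unfolding dec_def by (rule bij_betw_inv_into, rule enc_bij)

lemma enc_dec: "finite J \<Longrightarrow> k < card (Pd J) \<Longrightarrow> enc J (dec J k) = k"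
  unfolding dec_def using enc_bij by (metis atLeastLessThan_iff bij_betw_inv_into_right zero_le)

lemma dec_enc: "finite J \<Longrightarrow> x \<in> Pd J \<Longrightarrow> dec J (enc J x) = x"
  unfolding dec_def using enc_bij by (metis bij_betw_inv_into_left)

lemma enc_lt: "finite J \<Longrightarrow> x \<in> Pd J \<Longrightarrow> enc J x < card (Pd J)"
  using bij_betwE[OF enc_bij] by fastforce

lemma dec_in: "finite J \<Longrightarrow> k < card (Pd J) \<Longrightarrow> dec J k \<in> Pd J"
  using bij_betwE[OF dec_bij] by fastforce

lemma restrict_Pd: "w \<in> W \<Longrightarrow> restrict w J \<in> Pd J"
  by (auto simp: W_def Pd_def)

lemma card_Pd_pos: "finite J \<Longrightarrow> 0 < card (Pd J)"
  using card_Pd d_pos by (simp add: prod_pos)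

lemma restrict_lift: "x \<in> Pd J \<Longrightarrow> restrict (lift J x) J = x"
  by (auto simp: lift_def shift_def fun_eq_iff Pd_def PiE_def extensional_def)

definition psi :: "'i set \<Rightarrow> 'a::field mat \<Rightarrow> ('i \<Rightarrow> nat) \<Rightarrow> ('i \<Rightarrow> nat) \<Rightarrow> 'a" where
  "psi J M = (\<lambda>w w'. if w \<in> W \<and> w' \<in> W \<and> offeq J w w' then M $$ (enc J (restrict w J), enc J (restrict w' J)) else 0)"

lemma loc_psi: "finite J \<Longrightarrow> loc J (psi J M)"
proof (rule loc_intro)
  fix w v assume "psi J M w v \<noteq> 0"
  then show "w \<in> W \<and> v \<in> W \<and> offeq J w v" by (auto simp: psi_def split: if_splits)
next
  fix w w' v v' assume h: "w \<in> W" "w' \<in> W" "v \<in> W" "v' \<in> W" "offeq J w w'" "offeq J v v'"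
    "\<And>i. i \<in> J \<Longrightarrow> w i = v i \<and> w' i = v' i"
  have "restrict w J = restrict v J" "restrict w' J = restrict v' J" using h(7) by (auto simp: fun_eq_iff)
  then show "psi J M w w' = psi J M v v'" using h by (simp add: psi_def)
qed

lemma psi_add:
  assumes J: "finite J" and M: "M \<in> carrier_mat (card (Pd J)) (card (Pd J))"
    and N: "N \<in> carrier_mat (card (Pd J)) (card (Pd J))"
  shows "psi J (M + N) = madd (psi J M) (psi J N)"
proof (intro ext)
  fix w w'
  show "psi J (M + N) w w' = madd (psi J M) (psi J N) w w'"
    using M N enc_lt[OF J restrict_Pd] by (auto simp: psi_def madd_def)
qed

lemma psi_smult:
  assumes J: "finite J" and M: "M \<in> carrier_mat (card (Pd J)) (card (Pd J))"
  shows "psi J (c \<cdot>\<^sub>m M) = msc c (psi J M)"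
proof (intro ext)
  fix w w'
  show "psi J (c \<cdot>\<^sub>m M) w w' = msc c (psi J M) w w'"
    using M enc_lt[OF J restrict_Pd] by (auto simp: psi_def msc_def)
qed

lemma psi_one:
  assumes J: "finite J"
  shows "psi J (1\<^sub>m (card (Pd J))) = ident"
proof (intro ext)
  fix w w'
  show "psi J (1\<^sub>m (card (Pd J))) w w' = ident w w'"
  proof (cases "w \<in> W \<and> w' \<in> W \<and> offeq J w w'")
    case True
    have inj: "inj_on (enc J) (Pd J)" using enc_bij[OF J] by (simp add: bij_betw_def)
    have "enc J (restrict w J) = enc J (restrict w' J) \<longleftrightarrow> restrict w J = restrict w' J"
      using inj_on_eq_iff[OF inj restrict_Pd restrict_Pd] True by blast
    also have "\<dots> \<longleftrightarrow> w = w'" using True by (auto simp: fun_eq_iff offeq_def)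
    finally have e: "enc J (restrict w J) = enc J (restrict w' J) \<longleftrightarrow> w = w'" .
    show ?thesis using True e enc_lt[OF J restrict_Pd] by (auto simp: psi_def ident_def)
  next
    case False
    then have "w' \<noteq> w \<or> w \<notin> W" by auto
    then show ?thesis using False by (auto simp: psi_def ident_def)
  qed
qed

lemma bij_enc_ext:
  assumes J: "finite J" and w: "w \<in> W"
  shows "bij_betw (\<lambda>v. enc J (restrict v J)) (ext J w) {0..<card (Pd J)}"
  using bij_betw_trans[OF bij_restrict_ext[OF J w] enc_bij[OF J]] by (simp add: comp_def)

lemma psi_mult:
  assumes J: "finite J" and M: "M \<in> carrier_mat (card (Pd J)) (card (Pd J))"
    and N: "N \<in> carrier_mat (card (Pd J)) (card (Pd J))"
  shows "psi J (M * N) = mmul (psi J M) (psi J N)"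
proof (intro ext)
  fix w w'
  let ?n = "card (Pd J)"
  have "mmul (psi J M) (psi J N) w w' = (\<Sum>v\<in>ext J w. psi J M w v * psi J N v w')"
    by (rule mmul_eq[OF loc_psi[OF J] subset_refl J])
  also have "\<dots> = psi J (M * N) w w'"
  proof (cases "w \<in> W \<and> w' \<in> W \<and> offeq J w w'")
    case True
    have "(\<Sum>v\<in>ext J w. psi J M w v * psi J N v w') =
          (\<Sum>v\<in>ext J w. M $$ (enc J (restrict w J), enc J (restrict v J)) * N $$ (enc J (restrict v J), enc J (restrict w' J)))"
    proof (rule sum.cong[OF refl])
      fix v assume v: "v \<in> ext J w"
      then have "v \<in> W" "offeq J w v" by (auto simp: ext_def)
      moreover have "offeq J v w'" using offeq_trans[OF offeq_sym[OF \<open>offeq J w v\<close>]] True by blast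
      ultimately show "psi J M w v * psi J N v w' =
         M $$ (enc J (restrict w J), enc J (restrict v J)) * N $$ (enc J (restrict v J), enc J (restrict w' J))"
        using True by (simp add: psi_def)
    qed
    also have "\<dots> = (\<Sum>k\<in>{0..<?n}. M $$ (enc J (restrict w J), k) * N $$ (k, enc J (restrict w' J)))"
      by (rule sum.reindex_bij_betw[OF bij_enc_ext[OF J]]) (use True in blast)
    also have "\<dots> = (M * N) $$ (enc J (restrict w J), enc J (restrict w' J))"
      using mat_mult_entry[OF M N enc_lt[OF J restrict_Pd] enc_lt[OF J restrict_Pd]] True by simp
    also have "\<dots> = psi J (M * N) w w'" using True by (simp add: psi_def)
    finally show ?thesis .
  next
    case False
    have z: "psi J M w v * psi J N v w' = 0" if v: "v \<in> ext J w" for v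
    proof (cases "w \<in> W")
      case False then show ?thesis by (simp add: psi_def)
    next
      case True
      have "offeq J w v" using v by (simp add: ext_def)
      then have nc: "\<not> (v \<in> W \<and> w' \<in> W \<and> offeq J v w')" using False True offeq_trans by blast
      have "psi J N v w' = 0" by (simp only: psi_def if_not_P[OF nc])
      then show ?thesis by simp
    qed
    have "(\<Sum>v\<in>ext J w. psi J M w v * psi J N v w') = 0" by (rule sum.neutral) (use z in blast)
    moreover have "psi J (M * N) w w' = 0" by (simp only: psi_def if_not_P[OF False])
    ultimately show ?thesis by simp
  qed
  finally show "psi J (M * N) w w' = mmul (psi J M) (psi J N) w w'" by simp
qed

lemma psi_inj:
  assumes J: "finite J"
  shows "inj_on (psi J) (carrier_mat (card (Pd J)) (card (Pd J)))"
proof (rule inj_onI)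
  fix M N :: "'a mat"
  assume M: "M \<in> carrier_mat (card (Pd J)) (card (Pd J))" and N: "N \<in> carrier_mat (card (Pd J)) (card (Pd J))"
    and e: "psi J M = psi J N"
  show "M = N"
  proof (rule eq_matI)
    fix i j assume i: "i < dim_row N" and j: "j < dim_col N"
    let ?w = "lift J (dec J i)" and ?w' = "lift J (dec J j)"
    have i': "i < card (Pd J)" and j': "j < card (Pd J)" using i j N by auto
    have wW: "?w \<in> W" "?w' \<in> W" using lift_W[OF J dec_in[OF J]] i' j' by auto
    have oe: "offeq J ?w ?w'" by (simp add: offeq_def lift_def shift_def)
    have ri: "enc J (restrict ?w J) = i" using restrict_lift[OF dec_in[OF J i']] enc_dec[OF J i'] by simp
    have rj: "enc J (restrict ?w' J) = j" using restrict_lift[OF dec_in[OF J j']] enc_dec[OF J j'] by simp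
    have "psi J M ?w ?w' = psi J N ?w ?w'" using e by simp
    then show "M $$ (i, j) = N $$ (i, j)" using wW oe ri rj by (simp add: psi_def)
  qed (use M N in auto)
qed

lemma psi_surj:
  assumes a: "loc J a"
  shows "\<exists>M\<in>carrier_mat (card (Pd J)) (card (Pd J)). psi J M = a"
proof -
  have J: "finite J" using loc_finite[OF a] .
  let ?n = "card (Pd J)"
  define M where "M = mat ?n ?n (\<lambda>(i,j). a (lift J (dec J i)) (lift J (dec J j)))"
  have Mc: "M \<in> carrier_mat ?n ?n" by (simp add: M_def)
  have "psi J M = a"
  proof (intro ext)
    fix w w'
    show "psi J M w w' = a w w'"
    proof (cases "w \<in> W \<and> w' \<in> W \<and> offeq J w w'")
      case False
      then have "a w w' = 0" using locD1[OF a, of w w'] by blast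
      moreover have "psi J M w w' = 0" by (simp only: psi_def if_not_P[OF False])
      ultimately show ?thesis by simp
    next
      case True
      have rw: "restrict w J \<in> Pd J" "restrict w' J \<in> Pd J" using True restrict_Pd by auto
      have "psi J M w w' = a (lift J (restrict w J)) (lift J (restrict w' J))"
        using True enc_lt[OF J rw(1)] enc_lt[OF J rw(2)] dec_enc[OF J rw(1)] dec_enc[OF J rw(2)]
        by (simp add: psi_def M_def)
      also have "\<dots> = a w w'"
      proof (rule sym, rule locD2[OF a])
        show "w \<in> W" "w' \<in> W" "offeq J w w'" using True by auto
        show "lift J (restrict w J) \<in> W" "lift J (restrict w' J) \<in> W" using lift_W[OF J] rw by auto
        show "offeq J (lift J (restrict w J)) (lift J (restrict w' J))" by (simp add: offeq_def lift_def shift_def)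
        show "\<And>i. i \<in> J \<Longrightarrow> w i = lift J (restrict w J) i \<and> w' i = lift J (restrict w' J) i"
          by (simp add: lift_def shift_def)
      qed
      finally show ?thesis .
    qed
  qed
  then show ?thesis using Mc by blast
qed

end

lemma fsum_apply: "(sum f A) x = (\<Sum>a\<in>A. f a x)"
proof (cases "finite A")
  case True
  then show ?thesis by (induction A rule: finite_induct) auto
next
  case False
  then show ?thesis by simp
qed

lemma unit_div:
  fixes E :: "nat \<Rightarrow> nat \<Rightarrow> ('x \<Rightarrow> 'a::field) \<Rightarrow> ('x \<Rightarrow> 'a)" and X :: "'x set"
  assumes X: "finite X" and n: "0 < n"
    and lin_add: "\<And>i j g h. E i j (\<lambda>x. g x + h x) = (\<lambda>x. E i j g x + E i j h x)"
    and lin_sc: "\<And>i j c g. E i j (\<lambda>x. c * g x) = (\<lambda>x. c * E i j g x)"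
    and pres: "\<And>i j g. i < n \<Longrightarrow> j < n \<Longrightarrow> (\<forall>x. x \<notin> X \<longrightarrow> g x = 0) \<Longrightarrow> (\<forall>x. x \<notin> X \<longrightarrow> E i j g x = 0)"
    and mult: "\<And>i j k l g. i < n \<Longrightarrow> j < n \<Longrightarrow> k < n \<Longrightarrow> l < n \<Longrightarrow> (\<forall>x. x \<notin> X \<longrightarrow> g x = 0)
        \<Longrightarrow> E i j (E k l g) = (if j = k then E i l g else (\<lambda>x. 0))"
    and sum: "\<And>g. (\<forall>x. x \<notin> X \<longrightarrow> g x = 0) \<Longrightarrow> (\<lambda>x. \<Sum>i<n. E i i g x) = g"
  shows "n dvd card X"
proof -
  define sc where "sc = (\<lambda>(c::'a) (g::'x \<Rightarrow> 'a). (\<lambda>x. c * g x))"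
  interpret V: vector_space sc
    by unfold_locales (simp_all add: sc_def fun_eq_iff algebra_simps)
  define SX where "SX = {g::'x \<Rightarrow> 'a. \<forall>x. x \<notin> X \<longrightarrow> g x = 0}"
  have Eadd: "E i j (g + h) = E i j g + E i j h" for i j g h
    using lin_add[of i j g h] by (simp add: plus_fun_def)
  have Esc: "E i j (sc c g) = sc c (E i j g)" for i j c g
    using lin_sc by (simp add: sc_def)
  have E0: "E i j 0 = 0" for i j
    using lin_sc[of i j 0 0] by (simp add: zero_fun_def)
  have Esum: "E i j (\<Sum>p\<in>P. f p) = (\<Sum>p\<in>P. E i j (f p))" if "finite P" for i j P f
    using that
  proof (induction P rule: finite_induct)
    case empty
    show ?case by (simp only: sum.empty E0)
  next
    case (insert p P)
    show ?case by (simp only: sum.insert[OF insert(1,2)] Eadd insert(3))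
  qed
  have pres': "g \<in> SX \<Longrightarrow> i < n \<Longrightarrow> j < n \<Longrightarrow> E i j g \<in> SX" for g i j
    using pres by (simp add: SX_def)
  have SXsum: "finite P \<Longrightarrow> (\<And>p. p \<in> P \<Longrightarrow> f p \<in> SX) \<Longrightarrow> (\<Sum>p\<in>P. f p) \<in> SX" for P f
    by (simp add: SX_def fsum_apply)
  have indep_iff: "V.independent S \<longleftrightarrow> (\<forall>c. (\<Sum>v\<in>S. sc (c v) v) = 0 \<longrightarrow> (\<forall>v\<in>S. c v = 0))"
    if "finite S" for S
    using V.dependent_finite[OF that] by blast
  define V0 where "V0 = E 0 0 ` SX"
  obtain B where BV0: "B \<subseteq> V0" and Bind: "V.independent B" and Bsp: "V0 \<subseteq> V.span B"
    using V.maximal_independent_subset[of V0] by blast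
  define del where "del x = (\<lambda>y::'x. if y = x then (1::'a) else 0)" for x
  define EB where "EB = del ` X"
  have injdel: "inj_on del X"
  proof (rule inj_onI)
    fix x y assume "del x = del y"
    then have "del x x = del y x" by simp
    then show "x = y" by (simp add: del_def split: if_splits)
  qed
  have cEB: "card EB = card X" unfolding EB_def using card_image[OF injdel] .
  have fEB: "finite EB" unfolding EB_def using X by simp
  have SX_EB: "SX \<subseteq> V.span EB"
  proof
    fix g assume g: "g \<in> SX"
    have "g = (\<Sum>x\<in>X. sc (g x) (del x))"
    proof (rule ext)
      fix y
      have "(\<Sum>x\<in>X. sc (g x) (del x)) y = (\<Sum>x\<in>X. if y = x then g x else 0)"
        by (simp add: fsum_apply sc_def del_def) (rule sum.cong[OF refl], simp)
      also have "\<dots> = g y" using X g by (simp add: SX_def)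
      finally show "g y = (\<Sum>x\<in>X. sc (g x) (del x)) y" by simp
    qed
    also have "\<dots> \<in> V.span EB"
      by (rule V.span_sum) (auto simp: EB_def intro: V.span_scale V.span_base)
    finally show "g \<in> V.span EB" .
  qed
  have EBind: "V.independent EB"
    unfolding indep_iff[OF fEB]
  proof (intro allI impI ballI)
    fix c v assume s: "(\<Sum>v\<in>EB. sc (c v) v) = 0" and v: "v \<in> EB"
    then obtain x where x: "x \<in> X" "v = del x" by (auto simp: EB_def)
    have "0 = (\<Sum>v\<in>EB. sc (c v) v) x" using s by simp
    also have "\<dots> = (\<Sum>u\<in>X. c (del u) * del u x)"
      by (simp add: fsum_apply sc_def EB_def sum.reindex[OF injdel])
    also have "\<dots> = (\<Sum>u\<in>X. if u = x then c (del x) else 0)"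
      by (rule sum.cong[OF refl]) (auto simp: del_def)
    also have "\<dots> = c (del x)" using X x by simp
    finally show "c v = 0" using x by simp
  qed
  have V0SX: "V0 \<subseteq> SX" unfolding V0_def using pres' n by blast
  have BSX: "B \<subseteq> SX" using BV0 V0SX by blast
  have fB: "finite B" using V.independent_span_bound[OF fEB Bind] BSX SX_EB by blast
  have idem: "E 0 0 b = b" if bV: "b \<in> V0" for b
  proof -
    obtain g where g: "g \<in> SX" "b = E 0 0 g" using bV unfolding V0_def by blast
    show ?thesis using mult[of 0 0 0 0 g] g n by (simp add: SX_def)
  qed
  have B0: "0 \<notin> B" using Bind V.dependent_zero by blast
  define T where "T = (\<lambda>(i,b). E i 0 b) ` ({..<n} \<times> B)"
  have injT: "inj_on (\<lambda>(i,b). E i 0 b) ({..<n} \<times> B)"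
  proof (rule inj_onI)
    fix p q assume p: "p \<in> {..<n} \<times> B" and q: "q \<in> {..<n} \<times> B"
      and e0: "(\<lambda>(i,b). E i 0 b) p = (\<lambda>(i,b). E i 0 b) q"
    obtain i b where pib: "p = (i,b)" by (cases p)
    obtain i' b' where qib: "q = (i',b')" by (cases q)
    have i: "i \<in> {..<n}" and b: "b \<in> B" and i': "i' \<in> {..<n}" and b': "b' \<in> B"
      using p q pib qib by auto
    have e: "E i 0 b = E i' 0 b'" using e0 pib qib by simp
    have bS: "b \<in> SX" "b' \<in> SX" using b b' BSX by auto
    have 1: "E 0 i (E i 0 b) = b" using mult[of 0 i i 0 b] i n bS idem b BV0 by (auto simp: SX_def)
    have 2: "E 0 i (E i' 0 b') = (if i = i' then b' else 0)"
      using mult[of 0 i i' 0 b'] i i' n bS idem b' BV0 by (auto simp: SX_def zero_fun_def)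
    have "b = (if i = i' then b' else 0)" using 1 2 e by simp
    then show "p = q" using B0 b pib qib by (auto split: if_splits)
  qed
  have fT: "finite T" unfolding T_def using fB by simp
  have cT: "card T = n * card B" unfolding T_def using card_image[OF injT] by (simp add: card_cartesian_product)
  have TSX: "T \<subseteq> SX" unfolding T_def using BSX pres' n by auto
  have Tind: "V.independent T"
    unfolding indep_iff[OF fT]
  proof (intro allI impI ballI)
    fix c t assume s: "(\<Sum>t\<in>T. sc (c t) t) = 0" and t: "t \<in> T"
    then obtain j b where jb: "j < n" "b \<in> B" "t = E j 0 b" by (auto simp: T_def)
    have "(\<Sum>t\<in>T. sc (c t) t) = (\<Sum>p\<in>{..<n} \<times> B. sc (c (E (fst p) 0 (snd p))) (E (fst p) 0 (snd p)))"
      unfolding T_def by (subst sum.reindex[OF injT]) (simp add: case_prod_beta)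
    then have "0 = E 0 j (\<Sum>p\<in>{..<n} \<times> B. sc (c (E (fst p) 0 (snd p))) (E (fst p) 0 (snd p)))"
      using s E0 by simp
    also have "\<dots> = (\<Sum>p\<in>{..<n} \<times> B. sc (c (E (fst p) 0 (snd p))) (E 0 j (E (fst p) 0 (snd p))))"
      using fB by (simp add: Esum Esc)
    also have "\<dots> = (\<Sum>p\<in>{..<n} \<times> B. if fst p = j then sc (c (E j 0 (snd p))) (snd p) else 0)"
    proof (rule sum.cong[OF refl])
      fix p assume p: "p \<in> {..<n} \<times> B"
      have pS: "snd p \<in> SX" "snd p \<in> V0" using p BSX BV0 by auto
      have "E 0 j (E (fst p) 0 (snd p)) = (if j = fst p then snd p else 0)"
        using mult[of 0 j "fst p" 0 "snd p"] p jb n pS idem by (auto simp: SX_def zero_fun_def)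
      then show "sc (c (E (fst p) 0 (snd p))) (E 0 j (E (fst p) 0 (snd p))) =
          (if fst p = j then sc (c (E j 0 (snd p))) (snd p) else 0)"
        by (auto simp: sc_def zero_fun_def)
    qed
    also have "\<dots> = (\<Sum>p\<in>{j} \<times> B. sc (c (E j 0 (snd p))) (snd p))"
      using fB jb by (intro sum.mono_neutral_cong_right) auto
    also have "\<dots> = (\<Sum>b\<in>B. sc (c (E j 0 b)) b)"
    proof -
      have "{j} \<times> B = (\<lambda>b. (j,b)) ` B" by auto
      then show ?thesis by (simp add: sum.reindex inj_on_def)
    qed
    finally have z: "(\<Sum>b\<in>B. sc (c (E j 0 b)) b) = 0" by simp
    have H: "\<forall>c'. (\<Sum>v\<in>B. sc (c' v) v) = 0 \<longrightarrow> (\<forall>v\<in>B. c' v = 0)" using Bind indep_iff[OF fB] by blast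
    have "c (E j 0 b) = 0" using H[rule_format, of "\<lambda>v. c (E j 0 v)", OF z] jb by blast
    then show "c t = 0" using jb by simp
  qed
  have SX_T: "SX \<subseteq> V.span T"
  proof
    fix g assume g: "g \<in> SX"
    have "g = (\<Sum>i<n. E i i g)"
      using sum[of g] g by (simp add: SX_def fun_eq_iff fsum_apply)
    also have "\<dots> \<in> V.span T"
    proof (rule V.span_sum)
      fix i assume i: "i \<in> {..<n}"
      let ?h = "E 0 i g"
      have hS: "?h \<in> SX" using pres' g i n by auto
      have e: "E 0 0 ?h = ?h" using mult[of 0 0 0 i g] g i n by (simp add: SX_def)
      have "?h \<in> V0" unfolding V0_def by (rule image_eqI[where f="E 0 0" and x="?h", OF e[symmetric] hS])
      then have "?h \<in> V.span B" using Bsp by blast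
      then obtain u where u: "?h = (\<Sum>b\<in>B. sc (u b) b)" using V.span_finite[OF fB] by auto
      have "E i i g = E i 0 ?h" using mult[of i 0 0 i g] g i n by (simp add: SX_def)
      also have "\<dots> = (\<Sum>b\<in>B. sc (u b) (E i 0 b))" unfolding u using fB by (simp add: Esum Esc)
      also have "\<dots> \<in> V.span T"
        by (rule V.span_sum, rule V.span_scale, rule V.span_base) (use i in \<open>auto simp: T_def\<close>)
      finally show "E i i g \<in> V.span T" .
    qed
    finally show "g \<in> V.span T" .
  qed
  have "card T \<le> card EB" using V.independent_span_bound[OF fEB Tind] TSX SX_EB by blast
  moreover have "card EB \<le> card T"
  proof -
    have "EB \<subseteq> SX" by (auto simp: EB_def SX_def del_def)
    then have "EB \<subseteq> V.span T" using SX_T by blast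
    then show ?thesis using V.independent_span_bound[OF fT EBind] by blast
  qed
  ultimately have "card X = n * card B" using cEB cT by simp
  then show ?thesis by simp
qed


lemma fs_add: fixes f g :: "'b \<Rightarrow> 'a::field" shows "f \<in> fin_supp \<Longrightarrow> g \<in> fin_supp \<Longrightarrow> (\<lambda>x. f x + g x) \<in> fin_supp"
proof -
  assume f: "f \<in> fin_supp" and g: "g \<in> fin_supp"
  have "{x. f x + g x \<noteq> 0} \<subseteq> {x. f x \<noteq> 0} \<union> {x. g x \<noteq> 0}" by auto
  moreover have "finite ({x. f x \<noteq> 0} \<union> {x. g x \<noteq> 0})" using f g by (simp add: fin_supp_def)
  ultimately show ?thesis unfolding fin_supp_def by (simp add: finite_subset)
qed

lemma fs_sc: fixes f :: "'b \<Rightarrow> 'a::field" shows "f \<in> fin_supp \<Longrightarrow> (\<lambda>x. c * f x) \<in> fin_supp"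
proof -
  assume f: "f \<in> fin_supp"
  have "{x. c * f x \<noteq> 0} \<subseteq> {x. f x \<noteq> 0}" by auto
  moreover have "finite {x. f x \<noteq> 0}" using f by (simp add: fin_supp_def)
  ultimately show ?thesis unfolding fin_supp_def by (simp add: finite_subset)
qed

locale transp =
  fixes Psi :: "('b \<Rightarrow> 'a::field) \<Rightarrow> 'e" and S :: "'e set"
    and add :: "'e \<Rightarrow> 'e \<Rightarrow> 'e" and sm :: "'a \<Rightarrow> 'e \<Rightarrow> 'e" and mul :: "'e \<Rightarrow> 'e \<Rightarrow> 'e" and one :: 'e
  assumes bij: "bij_betw Psi fin_supp S"
    and padd: "\<And>f g. f \<in> fin_supp \<Longrightarrow> g \<in> fin_supp \<Longrightarrow> Psi (\<lambda>x. f x + g x) = add (Psi f) (Psi g)"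
    and psc: "\<And>c f. f \<in> fin_supp \<Longrightarrow> Psi (\<lambda>x. c * f x) = sm c (Psi f)"
    and mcl: "\<And>a b. a \<in> S \<Longrightarrow> b \<in> S \<Longrightarrow> mul a b \<in> S"
    and one: "one \<in> S"
    and dl: "\<And>a b c. a \<in> S \<Longrightarrow> b \<in> S \<Longrightarrow> c \<in> S \<Longrightarrow> mul (add a b) c = add (mul a c) (mul b c)"
    and dr: "\<And>a b c. a \<in> S \<Longrightarrow> b \<in> S \<Longrightarrow> c \<in> S \<Longrightarrow> mul a (add b c) = add (mul a b) (mul a c)"
    and as: "\<And>a b c. a \<in> S \<Longrightarrow> b \<in> S \<Longrightarrow> c \<in> S \<Longrightarrow> mul (mul a b) c = mul a (mul b c)"
    and sl: "\<And>k a b. a \<in> S \<Longrightarrow> b \<in> S \<Longrightarrow> mul (sm k a) b = sm k (mul a b)"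
    and sr: "\<And>k a b. a \<in> S \<Longrightarrow> b \<in> S \<Longrightarrow> mul a (sm k b) = sm k (mul a b)"
    and ul: "\<And>a. a \<in> S \<Longrightarrow> mul one a = a"
    and ur: "\<And>a. a \<in> S \<Longrightarrow> mul a one = a"
begin

definition Q where "Q = inv_into fin_supp Psi"
definition mm where "mm f g = Q (mul (Psi f) (Psi g))"
definition ee where "ee = Q one"

lemma Q_in: "a \<in> S \<Longrightarrow> Q a \<in> fin_supp"
  unfolding Q_def using bij by (metis bij_betw_def inv_into_into)

lemma Psi_Q: "a \<in> S \<Longrightarrow> Psi (Q a) = a"
  unfolding Q_def using bij by (metis bij_betw_inv_into_right)

lemma Q_Psi: "f \<in> fin_supp \<Longrightarrow> Q (Psi f) = f"
  unfolding Q_def using bij by (metis bij_betw_inv_into_left)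

lemma Psi_in: "f \<in> fin_supp \<Longrightarrow> Psi f \<in> S"
  using bij by (metis bij_betwE)

lemma Psi_inj: "f \<in> fin_supp \<Longrightarrow> g \<in> fin_supp \<Longrightarrow> Psi f = Psi g \<Longrightarrow> f = g"
  using Q_Psi by metis

lemma mm_in: "f \<in> fin_supp \<Longrightarrow> g \<in> fin_supp \<Longrightarrow> mm f g \<in> fin_supp"
  unfolding mm_def by (intro Q_in mcl Psi_in)

lemma Psi_mm: "f \<in> fin_supp \<Longrightarrow> g \<in> fin_supp \<Longrightarrow> Psi (mm f g) = mul (Psi f) (Psi g)"
  unfolding mm_def by (intro Psi_Q mcl Psi_in)

lemma eq_via_Psi: "f \<in> fin_supp \<Longrightarrow> g \<in> fin_supp \<Longrightarrow> Psi f = Psi g \<Longrightarrow> f = g"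
  by (rule Psi_inj)

lemma alg: "unital_algebra mm ee"
  unfolding unital_algebra_def
proof (intro conjI ballI allI)
  show "ee \<in> fin_supp" unfolding ee_def by (rule Q_in[OF one])
next
  fix f g :: "'b \<Rightarrow> 'a" assume "f \<in> fin_supp" "g \<in> fin_supp" then show "mm f g \<in> fin_supp" by (rule mm_in)
next
  fix f g h :: "'b \<Rightarrow> 'a" assume f: "f \<in> fin_supp" and g: "g \<in> fin_supp" and h: "h \<in> fin_supp"
  have fg: "(\<lambda>x. f x + g x) \<in> fin_supp" using fs_add[OF f g] .
  have gh: "(\<lambda>x. g x + h x) \<in> fin_supp" using fs_add[OF g h] .
  show "mm (\<lambda>x. f x + g x) h = (\<lambda>x. mm f h x + mm g h x)"
  proof (rule eq_via_Psi)
    show "mm (\<lambda>x. f x + g x) h \<in> fin_supp" using mm_in[OF fg h] .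
    show "(\<lambda>x. mm f h x + mm g h x) \<in> fin_supp" using fs_add[OF mm_in[OF f h] mm_in[OF g h]] .
    show "Psi (mm (\<lambda>x. f x + g x) h) = Psi (\<lambda>x. mm f h x + mm g h x)"
      using Psi_mm[OF fg h] padd[OF f g] padd[OF mm_in[OF f h] mm_in[OF g h]] Psi_mm[OF f h] Psi_mm[OF g h]
        dl[OF Psi_in[OF f] Psi_in[OF g] Psi_in[OF h]] by simp
  qed
  show "mm f (\<lambda>x. g x + h x) = (\<lambda>x. mm f g x + mm f h x)"
  proof (rule eq_via_Psi)
    show "mm f (\<lambda>x. g x + h x) \<in> fin_supp" using mm_in[OF f gh] .
    show "(\<lambda>x. mm f g x + mm f h x) \<in> fin_supp" using fs_add[OF mm_in[OF f g] mm_in[OF f h]] .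
    show "Psi (mm f (\<lambda>x. g x + h x)) = Psi (\<lambda>x. mm f g x + mm f h x)"
      using Psi_mm[OF f gh] padd[OF g h] padd[OF mm_in[OF f g] mm_in[OF f h]] Psi_mm[OF f g] Psi_mm[OF f h]
        dr[OF Psi_in[OF f] Psi_in[OF g] Psi_in[OF h]] by simp
  qed
  show "mm (mm f g) h = mm f (mm g h)"
  proof (rule eq_via_Psi)
    show "mm (mm f g) h \<in> fin_supp" using mm_in[OF mm_in[OF f g] h] .
    show "mm f (mm g h) \<in> fin_supp" using mm_in[OF f mm_in[OF g h]] .
    show "Psi (mm (mm f g) h) = Psi (mm f (mm g h))"
      using Psi_mm[OF mm_in[OF f g] h] Psi_mm[OF f mm_in[OF g h]] Psi_mm[OF f g] Psi_mm[OF g h]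
        as[OF Psi_in[OF f] Psi_in[OF g] Psi_in[OF h]] by simp
  qed
next
  fix c :: 'a and f g :: "'b \<Rightarrow> 'a" assume f: "f \<in> fin_supp" and g: "g \<in> fin_supp"
  have cf: "(\<lambda>x. c * f x) \<in> fin_supp" using fs_sc[OF f] .
  have cg: "(\<lambda>x. c * g x) \<in> fin_supp" using fs_sc[OF g] .
  show "mm (\<lambda>x. c * f x) g = (\<lambda>x. c * mm f g x)"
  proof (rule eq_via_Psi)
    show "mm (\<lambda>x. c * f x) g \<in> fin_supp" using mm_in[OF cf g] .
    show "(\<lambda>x. c * mm f g x) \<in> fin_supp" using fs_sc[OF mm_in[OF f g]] .
    show "Psi (mm (\<lambda>x. c * f x) g) = Psi (\<lambda>x. c * mm f g x)"
      using Psi_mm[OF cf g] psc[OF f] psc[OF mm_in[OF f g]] Psi_mm[OF f g] sl[OF Psi_in[OF f] Psi_in[OF g]]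
      by simp
  qed
  show "mm f (\<lambda>x. c * g x) = (\<lambda>x. c * mm f g x)"
  proof (rule eq_via_Psi)
    show "mm f (\<lambda>x. c * g x) \<in> fin_supp" using mm_in[OF f cg] .
    show "(\<lambda>x. c * mm f g x) \<in> fin_supp" using fs_sc[OF mm_in[OF f g]] .
    show "Psi (mm f (\<lambda>x. c * g x)) = Psi (\<lambda>x. c * mm f g x)"
      using Psi_mm[OF f cg] psc[OF g] psc[OF mm_in[OF f g]] Psi_mm[OF f g] sr[OF Psi_in[OF f] Psi_in[OF g]]
      by simp
  qed
next
  fix f :: "'b \<Rightarrow> 'a" assume f: "f \<in> fin_supp"
  have e: "ee \<in> fin_supp" "Psi ee = one" unfolding ee_def using Q_in[OF one] Psi_Q[OF one] by auto
  show "mm ee f = f"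
    by (rule eq_via_Psi[OF mm_in[OF e(1) f] f]) (simp add: Psi_mm[OF e(1) f] e(2) ul[OF Psi_in[OF f]])
  show "mm f ee = f"
    by (rule eq_via_Psi[OF mm_in[OF f e(1)] f]) (simp add: Psi_mm[OF f e(1)] e(2) ur[OF Psi_in[OF f]])
qed

lemma emb:
  fixes psi :: "'a mat \<Rightarrow> 'e"
  assumes pin: "\<And>M. M \<in> carrier_mat n n \<Longrightarrow> psi M \<in> S"
    and pinj: "inj_on psi (carrier_mat n n)"
    and padd': "\<And>M N. M \<in> carrier_mat n n \<Longrightarrow> N \<in> carrier_mat n n \<Longrightarrow> psi (M + N) = add (psi M) (psi N)"
    and pmul: "\<And>M N. M \<in> carrier_mat n n \<Longrightarrow> N \<in> carrier_mat n n \<Longrightarrow> psi (M * N) = mul (psi M) (psi N)"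
    and psm: "\<And>c M. M \<in> carrier_mat n n \<Longrightarrow> psi (c \<cdot>\<^sub>m M) = sm c (psi M)"
    and pone: "psi (1\<^sub>m n) = one"
  shows "matrix_embedding mm ee n (\<lambda>M. Q (psi M))"
  unfolding matrix_embedding_def
proof (intro conjI ballI allI)
  fix M :: "'a mat" assume M: "M \<in> carrier_mat n n"
  show "Q (psi M) \<in> fin_supp" by (rule Q_in[OF pin[OF M]])
next
  show "inj_on (\<lambda>M. Q (psi M)) (carrier_mat n n)"
  proof (rule inj_onI)
    fix M N :: "'a mat" assume M: "M \<in> carrier_mat n n" and N: "N \<in> carrier_mat n n" and e: "Q (psi M) = Q (psi N)"
    have "psi M = psi N" using arg_cong[OF e, of Psi] Psi_Q[OF pin[OF M]] Psi_Q[OF pin[OF N]] by simp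
    then show "M = N" using pinj M N by (simp add: inj_on_def)
  qed
next
  fix M N :: "'a mat" assume M: "M \<in> carrier_mat n n" and N: "N \<in> carrier_mat n n"
  have qM: "Q (psi M) \<in> fin_supp" and qN: "Q (psi N) \<in> fin_supp" using Q_in pin M N by auto
  show "Q (psi (M + N)) = (\<lambda>x. Q (psi M) x + Q (psi N) x)"
  proof (rule eq_via_Psi)
    have "M + N \<in> carrier_mat n n" using M N by simp
    then show "Q (psi (M + N)) \<in> fin_supp" using Q_in pin by blast
    show "(\<lambda>x. Q (psi M) x + Q (psi N) x) \<in> fin_supp" using fs_add[OF qM qN] .
    show "Psi (Q (psi (M + N))) = Psi (\<lambda>x. Q (psi M) x + Q (psi N) x)"
      using Psi_Q[OF pin[OF \<open>M + N \<in> carrier_mat n n\<close>]] padd'[OF M N] padd[OF qM qN]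
        Psi_Q[OF pin[OF M]] Psi_Q[OF pin[OF N]] by simp
  qed
  show "Q (psi (M * N)) = mm (Q (psi M)) (Q (psi N))"
    unfolding mm_def using Psi_Q pin M N pmul[OF M N] by simp
next
  fix c :: 'a and M :: "'a mat" assume M: "M \<in> carrier_mat n n"
  have qM: "Q (psi M) \<in> fin_supp" using Q_in pin M by auto
  show "Q (psi (c \<cdot>\<^sub>m M)) = (\<lambda>x. c * Q (psi M) x)"
  proof (rule eq_via_Psi)
    have "c \<cdot>\<^sub>m M \<in> carrier_mat n n" using M by simp
    then show "Q (psi (c \<cdot>\<^sub>m M)) \<in> fin_supp" using Q_in pin by blast
    show "(\<lambda>x. c * Q (psi M) x) \<in> fin_supp" using fs_sc[OF qM] .
    show "Psi (Q (psi (c \<cdot>\<^sub>m M))) = Psi (\<lambda>x. c * Q (psi M) x)"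
      using Psi_Q[OF pin[OF \<open>c \<cdot>\<^sub>m M \<in> carrier_mat n n\<close>]] psm[OF M] psc[OF qM]
        Psi_Q[OF pin[OF M]] by simp
  qed
next
  show "Q (psi (1\<^sub>m n)) = ee" unfolding ee_def pone ..
qed

lemma emb_back:
  assumes "matrix_embedding mm ee n phi"
  shows "\<And>M. M \<in> carrier_mat n n \<Longrightarrow> Psi (phi M) \<in> S"
    and "\<And>M N. M \<in> carrier_mat n n \<Longrightarrow> N \<in> carrier_mat n n \<Longrightarrow> Psi (phi (M + N)) = add (Psi (phi M)) (Psi (phi N))"
    and "\<And>M N. M \<in> carrier_mat n n \<Longrightarrow> N \<in> carrier_mat n n \<Longrightarrow> Psi (phi (M * N)) = mul (Psi (phi M)) (Psi (phi N))"
    and "Psi (phi (1\<^sub>m n)) = one"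
proof -
  have fs: "\<And>M. M \<in> carrier_mat n n \<Longrightarrow> phi M \<in> fin_supp" using assms by (simp add: matrix_embedding_def)
  have ad: "\<And>M N. M \<in> carrier_mat n n \<Longrightarrow> N \<in> carrier_mat n n \<Longrightarrow> phi (M + N) = (\<lambda>x. phi M x + phi N x)"
    and mu: "\<And>M N. M \<in> carrier_mat n n \<Longrightarrow> N \<in> carrier_mat n n \<Longrightarrow> phi (M * N) = mm (phi M) (phi N)"
    and on: "phi (1\<^sub>m n) = ee"
    using assms by (simp_all add: matrix_embedding_def)
  show "\<And>M. M \<in> carrier_mat n n \<Longrightarrow> Psi (phi M) \<in> S" using fs Psi_in by blast
  show "\<And>M N. M \<in> carrier_mat n n \<Longrightarrow> N \<in> carrier_mat n n \<Longrightarrow> Psi (phi (M + N)) = add (Psi (phi M)) (Psi (phi N))"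
    using ad fs padd by simp
  show "\<And>M N. M \<in> carrier_mat n n \<Longrightarrow> N \<in> carrier_mat n n \<Longrightarrow> Psi (phi (M * N)) = mul (Psi (phi M)) (Psi (phi N))"
    using mu fs Psi_mm by simp
  show "Psi (phi (1\<^sub>m n)) = one" using on Psi_Q[OF one] by (simp add: ee_def)
qed

end


definition Eu :: "nat \<Rightarrow> nat \<Rightarrow> nat \<Rightarrow> 'a::field mat" where
  "Eu n i j = mat n n (\<lambda>(a,b). if a = i \<and> b = j then 1 else 0)"

definition Dk :: "nat \<Rightarrow> nat \<Rightarrow> 'a::field mat" where
  "Dk n k = mat n n (\<lambda>(a,b). if a = b \<and> a < k then 1 else 0)"

lemma Eu_carrier: "Eu n i j \<in> carrier_mat n n" by (simp add: Eu_def)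
lemma Dk_carrier: "Dk n k \<in> carrier_mat n n" by (simp add: Dk_def)

lemma Eu_mult:
  assumes "i < n" "j < n" "k < n" "l < n"
  shows "Eu n i j * Eu n k l = (if j = k then Eu n i l else (0\<^sub>m n n :: 'a::field mat))"
proof (rule eq_matI)
  fix a b assume a: "a < dim_row (if j = k then Eu n i l else (0\<^sub>m n n :: 'a mat))"
    and b: "b < dim_col (if j = k then Eu n i l else (0\<^sub>m n n :: 'a mat))"
  have a': "a < n" and b': "b < n" using a b by (auto simp: Eu_def split: if_splits)
  have "(Eu n i j * Eu n k l) $$ (a, b) = (\<Sum>c\<in>{0..<n}. Eu n i j $$ (a, c) * (Eu n k l :: 'a mat) $$ (c, b))"
    by (rule mat_mult_entry[OF Eu_carrier Eu_carrier a' b'])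
  also have "\<dots> = (\<Sum>c\<in>{0..<n}. if c = j then (if a = i \<and> j = k \<and> b = l then 1 else 0) else 0)"
    by (rule sum.cong[OF refl]) (auto simp: Eu_def a' b')
  also have "\<dots> = (if a = i \<and> j = k \<and> b = l then 1 else 0)" using assms by simp
  also have "\<dots> = (if j = k then Eu n i l else (0\<^sub>m n n :: 'a mat)) $$ (a, b)"
    using a' b' by (auto simp: Eu_def)
  finally show "(Eu n i j * Eu n k l) $$ (a, b) = (if j = k then Eu n i l else (0\<^sub>m n n :: 'a mat)) $$ (a, b)" .
qed (auto simp: Eu_def)

lemma Dk_0: "Dk n 0 = 0\<^sub>m n n"
  by (rule eq_matI) (auto simp: Dk_def)

lemma Dk_n: "Dk n n = 1\<^sub>m n"
  by (rule eq_matI) (auto simp: Dk_def)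

lemma Dk_Suc: "k < n \<Longrightarrow> Dk n (Suc k) = Dk n k + Eu n k k"
  by (rule eq_matI) (auto simp: Dk_def Eu_def)

locale tens2 = tens d for d :: "'i \<Rightarrow> nat" +
  fixes hb :: "'i \<Rightarrow> ('i \<Rightarrow> nat \<times> nat)"
  assumes hb: "bij_betw hb UNIV U"
begin

definition Tm :: "('i \<Rightarrow> 'a::field) \<Rightarrow> ('i \<Rightarrow> nat \<times> nat) \<Rightarrow> 'a" where
  "Tm g = (\<lambda>u. if u \<in> U then g (inv_into UNIV hb u) else 0)"

definition Psi :: "('i \<Rightarrow> 'a::field) \<Rightarrow> ('i \<Rightarrow> nat) \<Rightarrow> ('i \<Rightarrow> nat) \<Rightarrow> 'a" where
  "Psi g = Phi (Tm g)"

definition SA :: "(('i \<Rightarrow> nat) \<Rightarrow> ('i \<Rightarrow> nat) \<Rightarrow> 'a::field) set" where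
  "SA = {a. \<exists>J. loc J a}"

definition mA :: "('i \<Rightarrow> 'a::field) \<Rightarrow> ('i \<Rightarrow> 'a) \<Rightarrow> ('i \<Rightarrow> 'a)" where
  "mA f g = inv_into fin_supp Psi (mmul (Psi f) (Psi g))"

definition eA :: "'i \<Rightarrow> 'a::field" where
  "eA = inv_into fin_supp Psi ident"

lemma hb_inv: "inv_into UNIV hb (hb x) = x"
  using hb by (simp add: bij_betw_def inv_into_f_f)

lemma hb_in: "hb x \<in> U"
  using hb by (auto simp: bij_betw_def)

lemma hb_inv2: "u \<in> U \<Longrightarrow> hb (inv_into UNIV hb u) = u"
  using hb by (meson bij_betw_inv_into_right)

lemma Tm_fs:
  assumes g: "g \<in> fin_supp"
  shows "Tm g \<in> fsU"
proof -
  have s: "{u. Tm g u \<noteq> 0} \<subseteq> hb ` {x. g x \<noteq> 0}"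
  proof
    fix u assume "u \<in> {u. Tm g u \<noteq> 0}"
    then have u: "u \<in> U" "g (inv_into UNIV hb u) \<noteq> 0" by (auto simp: Tm_def split: if_splits)
    then show "u \<in> hb ` {x. g x \<noteq> 0}" using hb_inv2[OF u(1)] by (metis (mono_tags) image_eqI mem_Collect_eq)
  qed
  have "finite (hb ` {x. g x \<noteq> 0})" using g by (simp add: fin_supp_def)
  then have "finite {u. Tm g u \<noteq> 0}" using s by (rule finite_subset[rotated])
  moreover have "\<forall>u. Tm g u \<noteq> 0 \<longrightarrow> u \<in> U" by (auto simp: Tm_def split: if_splits)
  ultimately show ?thesis by (simp add: fsU_def)
qed

lemma Tm_add: "Tm (\<lambda>x. g x + h x) = (\<lambda>u. Tm g u + Tm h u)"
  by (auto simp: Tm_def fun_eq_iff)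

lemma Tm_sc: "Tm (\<lambda>x. c * g x) = (\<lambda>u. c * Tm g u)"
  by (auto simp: Tm_def fun_eq_iff)

lemma Tm_app: "Tm g (hb x) = g x"
  by (simp add: Tm_def hb_in hb_inv)

lemma Psi_add: "g \<in> fin_supp \<Longrightarrow> h \<in> fin_supp \<Longrightarrow> Psi (\<lambda>x. g x + h x) = madd (Psi g) (Psi h)"
  unfolding Psi_def Tm_add by (rule Phi_add[OF Tm_fs Tm_fs])

lemma Psi_sc: "g \<in> fin_supp \<Longrightarrow> Psi (\<lambda>x. c * g x) = msc c (Psi g)"
  unfolding Psi_def Tm_sc by (rule Phi_sc[OF Tm_fs])

lemma Psi_loc: "g \<in> fin_supp \<Longrightarrow> loc (Jf (Tm g)) (Psi g)"
  unfolding Psi_def using loc_Phi[OF Tm_fs subset_refl finite_Jf[OF Tm_fs]] by blast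

lemma Psi_bij: "bij_betw (Psi :: ('i \<Rightarrow> 'a::field) \<Rightarrow> _) fin_supp SA"
  unfolding bij_betw_def
proof (intro conjI)
  show "inj_on (Psi :: ('i \<Rightarrow> 'a) \<Rightarrow> _) fin_supp"
  proof (rule inj_onI)
    fix g h :: "'i \<Rightarrow> 'a" assume g: "g \<in> fin_supp" and h: "h \<in> fin_supp" and e: "Psi g = Psi h"
    have "Tm g = Tm h" using Phi_inj[OF Tm_fs[OF g] Tm_fs[OF h]] e by (simp add: Psi_def)
    then have "\<And>x. Tm g (hb x) = Tm h (hb x)" by simp
    then show "g = h" by (simp add: Tm_app fun_eq_iff)
  qed
  show "(Psi :: ('i \<Rightarrow> 'a) \<Rightarrow> _) ` fin_supp = SA"
  proof
    show "(Psi :: ('i \<Rightarrow> 'a) \<Rightarrow> _) ` fin_supp \<subseteq> SA" using Psi_loc by (auto simp: SA_def)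
    show "SA \<subseteq> (Psi :: ('i \<Rightarrow> 'a) \<Rightarrow> _) ` fin_supp"
    proof
      fix a :: "('i \<Rightarrow> nat) \<Rightarrow> ('i \<Rightarrow> nat) \<Rightarrow> 'a" assume "a \<in> SA"
      then obtain J where "loc J a" by (auto simp: SA_def)
      then obtain f where f: "f \<in> fsU" "Phi f = a" using Phi_surj by blast
      define g where "g = (\<lambda>x. f (hb x))"
      have inj: "inj hb" using hb by (simp add: bij_betw_def)
      have "{x. g x \<noteq> 0} = hb -` {u. f u \<noteq> 0}" by (auto simp: g_def)
      then have "finite {x. g x \<noteq> 0}" using finite_vimageI[OF _ inj, of "{u. f u \<noteq> 0}"] f(1)
        by (simp add: fsU_def)
      then have gfs: "g \<in> fin_supp" by (simp add: fin_supp_def)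
      have "Tm g = f"
      proof
        fix u show "Tm g u = f u"
        proof (cases "u \<in> U")
          case True then show ?thesis by (simp add: Tm_def g_def hb_inv2)
        next
          case False then have "f u = 0" using f(1) by (auto simp: fsU_def)
          then show ?thesis using False by (simp add: Tm_def)
        qed
      qed
      then have "Psi g = a" using f(2) by (simp add: Psi_def)
      then show "a \<in> Psi ` fin_supp" using gfs by blast
    qed
  qed
qed

lemma SA_common:
  assumes "a \<in> SA" "b \<in> SA" "c \<in> SA"
  obtains J where "loc J a" "loc J b" "loc J c"
proof -
  obtain J1 J2 J3 where j: "loc J1 a" "loc J2 b" "loc J3 c" using assms by (auto simp: SA_def)
  let ?J = "J1 \<union> J2 \<union> J3"
  have f: "finite ?J" using loc_finite[OF j(1)] loc_finite[OF j(2)] loc_finite[OF j(3)] by simp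
  show ?thesis by (rule that; rule loc_mono[OF _ _ f]) (use j in auto)
qed

lemma transp_inst: "transp Psi SA madd msc mmul (ident :: _ \<Rightarrow> _ \<Rightarrow> 'a::field)"
proof (unfold_locales)
  show "bij_betw Psi fin_supp (SA :: (_ \<Rightarrow> _ \<Rightarrow> 'a) set)" by (rule Psi_bij)
  show "\<And>f g. f \<in> fin_supp \<Longrightarrow> g \<in> fin_supp \<Longrightarrow> Psi (\<lambda>x. f x + g x) = madd (Psi f) (Psi g)" by (rule Psi_add)
  show "\<And>c f. f \<in> fin_supp \<Longrightarrow> Psi (\<lambda>x. c * f x) = msc c (Psi f)" by (rule Psi_sc)
  show "\<And>a b. a \<in> SA \<Longrightarrow> b \<in> SA \<Longrightarrow> mmul a b \<in> SA"
    by (auto simp: SA_def intro: loc_mmul)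
  show "(ident :: _ \<Rightarrow> _ \<Rightarrow> 'a) \<in> SA" using loc_ident by (auto simp: SA_def)
  show "\<And>a b c. a \<in> SA \<Longrightarrow> b \<in> SA \<Longrightarrow> c \<in> SA \<Longrightarrow> mmul (madd a b) c = madd (mmul a c) (mmul b c)"
    by (erule (2) SA_common, rule mmul_distl)
  show "\<And>a b c. a \<in> SA \<Longrightarrow> b \<in> SA \<Longrightarrow> c \<in> SA \<Longrightarrow> mmul a (madd b c) = madd (mmul a b) (mmul a c)"
    by (erule (2) SA_common, rule mmul_distr)
  show "\<And>a b c. a \<in> SA \<Longrightarrow> b \<in> SA \<Longrightarrow> c \<in> SA \<Longrightarrow> mmul (mmul a b) c = mmul a (mmul b c)"
    by (erule (2) SA_common, rule mmul_assoc)
  show "\<And>k a b. a \<in> SA \<Longrightarrow> b \<in> SA \<Longrightarrow> mmul (msc k a) b = msc k (mmul a b)"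
    by (auto simp: SA_def intro: mmul_scl)
  show "\<And>k a b. a \<in> SA \<Longrightarrow> b \<in> SA \<Longrightarrow> mmul a (msc k b) = msc k (mmul a b)"
    by (auto simp: SA_def intro: mmul_scr)
  show "\<And>a. a \<in> SA \<Longrightarrow> mmul ident a = a" by (auto simp: SA_def intro: mmul_identl)
  show "\<And>a. a \<in> SA \<Longrightarrow> mmul a ident = a" by (auto simp: SA_def intro: mmul_identr)
qed

lemma mA_eq: "transp.mm Psi mmul = (mA :: _ \<Rightarrow> _ \<Rightarrow> _ \<Rightarrow> 'a::field)"
  by (simp add: fun_eq_iff transp.mm_def[OF transp_inst] transp.Q_def[OF transp_inst] mA_def)

lemma eA_eq: "transp.ee Psi ident = (eA :: _ \<Rightarrow> 'a::field)"
  by (simp add: transp.ee_def[OF transp_inst] transp.Q_def[OF transp_inst] eA_def)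

lemma R1: "unital_algebra mA (eA :: _ \<Rightarrow> 'a::field)"
  using transp.alg[OF transp_inst] mA_eq eA_eq by metis

lemma R_emb:
  assumes J: "finite J"
  shows "matrix_embedding mA (eA :: _ \<Rightarrow> 'a::field) (card (Pd J)) (\<lambda>M. inv_into fin_supp Psi (psi J M))"
proof -
  have "matrix_embedding (transp.mm Psi mmul) (transp.ee Psi ident) (card (Pd J))
          (\<lambda>M. transp.Q Psi (psi J M :: _ \<Rightarrow> _ \<Rightarrow> 'a))"
  proof (rule transp.emb[OF transp_inst])
    show "\<And>M. M \<in> carrier_mat (card (Pd J)) (card (Pd J)) \<Longrightarrow> (psi J M :: _ \<Rightarrow> _ \<Rightarrow> 'a) \<in> SA"
      using loc_psi[OF J] by (auto simp: SA_def)
    show "inj_on (psi J :: 'a mat \<Rightarrow> _) (carrier_mat (card (Pd J)) (card (Pd J)))" by (rule psi_inj[OF J])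
    show "\<And>M N. M \<in> carrier_mat (card (Pd J)) (card (Pd J)) \<Longrightarrow> N \<in> carrier_mat (card (Pd J)) (card (Pd J)) \<Longrightarrow>
        psi J (M + N) = madd (psi J M) (psi J N :: _ \<Rightarrow> _ \<Rightarrow> 'a)" by (rule psi_add[OF J])
    show "\<And>M N. M \<in> carrier_mat (card (Pd J)) (card (Pd J)) \<Longrightarrow> N \<in> carrier_mat (card (Pd J)) (card (Pd J)) \<Longrightarrow>
        psi J (M * N) = mmul (psi J M) (psi J N :: _ \<Rightarrow> _ \<Rightarrow> 'a)" by (rule psi_mult[OF J])
    show "\<And>c M. M \<in> carrier_mat (card (Pd J)) (card (Pd J)) \<Longrightarrow>
        psi J (c \<cdot>\<^sub>m M) = msc c (psi J M :: _ \<Rightarrow> _ \<Rightarrow> 'a)" by (rule psi_smult[OF J])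
    show "psi J (1\<^sub>m (card (Pd J))) = (ident :: _ \<Rightarrow> _ \<Rightarrow> 'a)" by (rule psi_one[OF J])
  qed
  then show ?thesis unfolding mA_eq eA_eq transp.Q_def[OF transp_inst] .
qed

lemma R3: "finite J \<Longrightarrow> card (Pd J) \<in> matrix_degrees mA (eA :: _ \<Rightarrow> 'a::field)"
  using R_emb[of J] card_Pd_pos[of J] unfolding matrix_degrees_def by blast

lemma R2: "locally_matrix mA (eA :: _ \<Rightarrow> 'a::field)"
  unfolding locally_matrix_def
proof (intro allI impI)
  fix S' :: "('i \<Rightarrow> 'a) set" assume S': "finite S' \<and> S' \<subseteq> fin_supp"
  let ?J = "\<Union>g\<in>S'. Jf (Tm g)"
  have J: "finite ?J" using S' finite_Jf[OF Tm_fs] by blast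
  have "S' \<subseteq> (\<lambda>M. inv_into fin_supp Psi (psi ?J M)) ` carrier_mat (card (Pd ?J)) (card (Pd ?J))"
  proof
    fix g assume g: "g \<in> S'"
    have gfs: "g \<in> fin_supp" using g S' by blast
    have "loc ?J (Psi g)" by (rule loc_mono[OF Psi_loc[OF gfs] _ J]) (use g in blast)
    then obtain M where M: "M \<in> carrier_mat (card (Pd ?J)) (card (Pd ?J))" "psi ?J M = Psi g"
      using psi_surj by blast
    have "inv_into fin_supp Psi (psi ?J M) = g"
      using M(2) transp.Q_Psi[OF transp_inst gfs] by (simp add: transp.Q_def[OF transp_inst])
    then show "g \<in> (\<lambda>M. inv_into fin_supp Psi (psi ?J M)) ` carrier_mat (card (Pd ?J)) (card (Pd ?J))"
      using M(1) by (metis image_eqI)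
  qed
  then show "\<exists>n \<phi>. 0 < n \<and> matrix_embedding mA eA n \<phi> \<and> S' \<subseteq> \<phi> ` carrier_mat n n"
    using R_emb[OF J] card_Pd_pos[OF J] by blast
qed

end

context tens
begin

lemma act_pres:
  assumes a: "loc J a" and g: "\<forall>x. x \<notin> ext J w0 \<longrightarrow> g x = 0" and x: "x \<notin> ext J w0"
  shows "act a g x = 0"
  unfolding act_def
proof (rule sum.neutral, rule ballI)
  fix v assume "v \<in> {v. a x v \<noteq> 0}"
  then have h: "x \<in> W" "v \<in> W" "offeq J x v" using locD1[OF a] by auto
  have "v \<notin> ext J w0"
  proof
    assume "v \<in> ext J w0"
    then have "offeq J w0 v" by (simp add: ext_def)
    then have "offeq J w0 x" using offeq_trans offeq_sym h(3) by blast
    then show False using x h(1) by (simp add: ext_def)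
  qed
  then show "a x v * g v = 0" using g by simp
qed

end

context tens2
begin

lemma R4:
  assumes nD: "n \<in> matrix_degrees mA (eA :: _ \<Rightarrow> 'a::field)"
  shows "\<exists>J. finite J \<and> n dvd card (Pd J)"
proof -
  from nD obtain phi where n: "0 < n" and emb: "matrix_embedding mA (eA :: _ \<Rightarrow> 'a) n phi"
    by (auto simp: matrix_degrees_def)
  note emb' = emb[unfolded mA_eq[symmetric] eA_eq[symmetric]]
  define chi where "chi M = Psi (phi M)" for M
  have chiS: "\<And>M. M \<in> carrier_mat n n \<Longrightarrow> chi M \<in> SA"
    unfolding chi_def by (rule transp.emb_back(1)[OF transp_inst emb'])
  have chiadd: "\<And>M N. M \<in> carrier_mat n n \<Longrightarrow> N \<in> carrier_mat n n \<Longrightarrow> chi (M + N) = madd (chi M) (chi N)"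
    unfolding chi_def by (rule transp.emb_back(2)[OF transp_inst emb'])
  have chimul: "\<And>M N. M \<in> carrier_mat n n \<Longrightarrow> N \<in> carrier_mat n n \<Longrightarrow> chi (M * N) = mmul (chi M) (chi N)"
    unfolding chi_def by (rule transp.emb_back(3)[OF transp_inst emb'])
  have chione: "chi (1\<^sub>m n) = ident"
    unfolding chi_def by (rule transp.emb_back(4)[OF transp_inst emb'])
  have chi0: "chi (0\<^sub>m n n) = (\<lambda>w w'. 0)"
  proof -
    have z: "(0\<^sub>m n n :: 'a mat) \<in> carrier_mat n n" by simp
    have "chi (0\<^sub>m n n + 0\<^sub>m n n) = madd (chi (0\<^sub>m n n)) (chi (0\<^sub>m n n))" by (rule chiadd[OF z z])
    moreover have "(0\<^sub>m n n + 0\<^sub>m n n :: 'a mat) = 0\<^sub>m n n" by simp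
    ultimately have e: "chi (0\<^sub>m n n) = madd (chi (0\<^sub>m n n)) (chi (0\<^sub>m n n))" by simp
    show ?thesis
    proof (intro ext)
      fix w w'
      have "chi (0\<^sub>m n n) w w' = chi (0\<^sub>m n n) w w' + chi (0\<^sub>m n n) w w'"
        using fun_cong[OF fun_cong[OF e, of w], of w'] by (simp add: madd_def)
      then show "chi (0\<^sub>m n n) w w' = 0" by (metis add_cancel_left_right)
    qed
  qed
  define Js where "Js p = (SOME J. loc J (chi (Eu n (fst p) (snd p) :: 'a mat)))" for p
  have locJs: "loc (Js p) (chi (Eu n (fst p) (snd p)))" for p
  proof -
    have "chi (Eu n (fst p) (snd p)) \<in> SA" by (rule chiS[OF Eu_carrier])
    then have "\<exists>J. loc J (chi (Eu n (fst p) (snd p) :: 'a mat))" by (simp add: SA_def)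
    then show ?thesis unfolding Js_def by (rule someI_ex)
  qed
  define J where "J = (\<Union>p\<in>{..<n}\<times>{..<n}. Js p)"
  have Jfin: "finite J" unfolding J_def using loc_finite[OF locJs] by blast
  have locE: "loc J (chi (Eu n i j))" if "i < n" "j < n" for i j
  proof -
    have "loc (Js (i,j)) (chi (Eu n i j))" using locJs[of "(i,j)"] by simp
    moreover have "Js (i,j) \<subseteq> J" unfolding J_def using that by blast
    ultimately show ?thesis using loc_mono Jfin by blast
  qed
  define X where "X = ext J (\<lambda>_. 0)"
  have cX: "card X = card (Pd J)" unfolding X_def using card_ext[OF Jfin zero_W] card_Pd[OF Jfin] by simp
  have XW: "X \<subseteq> W" unfolding X_def ext_def by blast
  have "n dvd card X"
  proof (rule unit_div[where E = "\<lambda>i j g. act (chi (Eu n i j)) g"])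
    show "finite X" unfolding X_def by (rule finite_ext[OF Jfin])
    show "0 < n" by fact
    show "\<And>i j g h. act (chi (Eu n i j)) (\<lambda>x. g x + h x) = (\<lambda>x. act (chi (Eu n i j)) g x + act (chi (Eu n i j)) h x)"
      by (simp add: act_lin_add fun_eq_iff)
    show "\<And>i j c g. act (chi (Eu n i j)) (\<lambda>x. c * g x) = (\<lambda>x. c * act (chi (Eu n i j)) g x)"
      by (simp add: act_lin_sc fun_eq_iff)
    show "\<And>i j g. i < n \<Longrightarrow> j < n \<Longrightarrow> \<forall>x. x \<notin> X \<longrightarrow> g x = 0 \<Longrightarrow> \<forall>x. x \<notin> X \<longrightarrow> act (chi (Eu n i j)) g x = 0"
      unfolding X_def using act_pres locE by blast
    show "act (chi (Eu n i j)) (act (chi (Eu n k l)) g) = (if j = k then act (chi (Eu n i l)) g else (\<lambda>x. 0))"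
      if "i < n" "j < n" "k < n" "l < n" for i j k l and g :: "('i \<Rightarrow> nat) \<Rightarrow> 'a"
    proof -
      have "act (chi (Eu n i j)) (act (chi (Eu n k l)) g) = act (mmul (chi (Eu n i j)) (chi (Eu n k l))) g"
        by (rule act_mmul[OF locE locE, symmetric]) (use that in auto)
      also have "\<dots> = act (chi (Eu n i j * Eu n k l)) g" by (simp add: chimul Eu_carrier)
      also have "\<dots> = (if j = k then act (chi (Eu n i l)) g else (\<lambda>x. 0))"
      proof (cases "j = k")
        case True
        then show ?thesis unfolding Eu_mult[OF that] by simp
      next
        case False
        then show ?thesis unfolding Eu_mult[OF that] by (simp add: chi0 act_zero fun_eq_iff)
      qed
      finally show ?thesis .
    qed
    show "(\<lambda>x. \<Sum>i<n. act (chi (Eu n i i)) g x) = g" if g: "\<forall>x. x \<notin> X \<longrightarrow> g x = 0" for g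
    proof -
      have step: "k \<le> n \<Longrightarrow> (\<lambda>x. \<Sum>i<k. act (chi (Eu n i i)) g x) = act (chi (Dk n k)) g" for k
      proof (induction k)
        case 0
        show ?case by (simp add: Dk_0 chi0 act_zero fun_eq_iff)
      next
        case (Suc k)
        then have k: "k < n" by simp
        have IH: "(\<lambda>x. \<Sum>i<k. act (chi (Eu n i i)) g x) = act (chi (Dk n k)) g" using Suc by simp
        have a1: "chi (Dk n k) \<in> SA" "chi (Eu n k k) \<in> SA"
          by (rule chiS[OF Dk_carrier], rule chiS[OF Eu_carrier])
        obtain L where L: "loc L (chi (Dk n k))" "loc L (chi (Eu n k k))"
          using SA_common[OF a1(1) a1(2) a1(2)] by blast
        have "act (chi (Dk n (Suc k))) g = act (madd (chi (Dk n k)) (chi (Eu n k k))) g"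
          unfolding Dk_Suc[OF k, where 'a='a] chiadd[OF Dk_carrier Eu_carrier] ..
        also have "\<dots> = (\<lambda>x. act (chi (Dk n k)) g x + act (chi (Eu n k k)) g x)"
          using act_madd[OF L] by (simp add: fun_eq_iff)
        finally show ?case using IH by (simp add: fun_eq_iff)
      qed
      have "(\<lambda>x. \<Sum>i<n. act (chi (Eu n i i)) g x) = act (chi (Dk n n)) g" by (rule step) simp
      also have "\<dots> = g" unfolding Dk_n chione
      proof
        fix x show "act ident g x = g x" using g XW by (auto simp: act_ident)
      qed
      finally show ?thesis .
    qed
  qed
  then show ?thesis using cX Jfin by auto
qed

end

context tens
begin

lemma card_U:
  assumes inf: "infinite (UNIV :: 'i set)" and d2: "\<And>i. 2 \<le> d i"
  shows "\<exists>hb. bij_betw hb (UNIV :: 'i set) U"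
proof -
  have 1: "lepoll (UNIV :: 'i set) U"
    unfolding lepoll_def
  proof (intro exI conjI)
    show "inj_on (\<lambda>i j. if j = i then (0::nat, 1::nat) else (0, 0)) (UNIV :: 'i set)"
    proof (rule inj_onI)
      fix x y :: 'i
      assume e: "(\<lambda>j. if j = x then (0::nat, 1::nat) else (0, 0)) = (\<lambda>j. if j = y then (0, 1) else (0, 0))"
      have "(if x = x then (0::nat, 1::nat) else (0, 0)) = (if x = y then (0, 1) else (0, 0))"
        using fun_cong[OF e, of x] .
      then show "x = y" by (auto split: if_splits)
    qed
    show "(\<lambda>i j. if j = i then (0::nat, 1::nat) else (0, 0)) ` (UNIV :: 'i set) \<subseteq> U"
    proof
      fix u assume "u \<in> (\<lambda>i j. if j = i then (0::nat, 1::nat) else (0, 0)) ` (UNIV :: 'i set)"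
      then obtain i where u: "u = (\<lambda>j. if j = i then (0::nat, 1::nat) else (0, 0))" by blast
      have "{j. u j \<noteq> (0,0)} = {i}" by (auto simp: u)
      moreover have "\<forall>j. fst (u j) < d j \<and> snd (u j) < d j"
      proof
        fix j
        have "2 \<le> d j" by (rule d2)
        then show "fst (u j) < d j \<and> snd (u j) < d j" by (cases "j = i") (simp_all add: u)
      qed
      ultimately show "u \<in> U" by (simp add: U_def)
    qed
  qed
  define gr where "gr u = (\<lambda>i. (i, u i)) ` supp u" for u :: "'i \<Rightarrow> nat \<times> nat"
  have a: "lepoll U (Fpow (UNIV :: ('i \<times> (nat \<times> nat)) set))"
    unfolding lepoll_def
  proof (intro exI conjI)
    show "inj_on gr U"
    proof (rule inj_onI)
      fix u v assume u: "u \<in> U" and v: "v \<in> U" and e: "gr u = gr v"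
      show "u = v"
      proof
        fix i
        show "u i = v i"
        proof (cases "i \<in> supp u")
          case True
          then have "(i, u i) \<in> gr v" using e by (auto simp: gr_def)
          then show ?thesis by (auto simp: gr_def)
        next
          case False
          then have u0: "u i = (0,0)" by (simp add: supp_def)
          show ?thesis
          proof (cases "i \<in> supp v")
            case True
            then have "(i, v i) \<in> gr u" using e by (auto simp: gr_def)
            then show ?thesis using False by (auto simp: gr_def)
          next
            case False
            then show ?thesis using u0 by (simp add: supp_def)
          qed
        qed
      qed
    qed
    show "gr ` U \<subseteq> Fpow UNIV"
      using finite_supp by (auto simp: gr_def Fpow_def)
  qed
  have infp: "infinite (UNIV :: ('i \<times> (nat \<times> nat)) set)" using inf by (simp add: finite_prod)
  have b: "eqpoll (Fpow (UNIV :: ('i \<times> (nat \<times> nat)) set)) (UNIV :: ('i \<times> (nat \<times> nat)) set)"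
    by (rule eqpoll_Fpow[OF infp])
  have nn: "lepoll (UNIV :: (nat \<times> nat) set) (UNIV :: 'i set)"
  proof -
    have "lepoll (UNIV :: (nat \<times> nat) set) (UNIV :: nat set)"
      unfolding lepoll_def by (intro exI[of _ prod_encode]) (simp add: inj_prod_encode)
    moreover have "lepoll (UNIV :: nat set) (UNIV :: 'i set)" using infinite_le_lepoll inf by blast
    ultimately show ?thesis by (rule lepoll_trans)
  qed
  have c: "lepoll (UNIV :: ('i \<times> (nat \<times> nat)) set) (UNIV :: ('i \<times> 'i) set)"
    using times_lepoll_mono[OF lepoll_refl nn, of "UNIV :: 'i set"] by simp
  have e: "eqpoll (UNIV :: ('i \<times> 'i) set) (UNIV :: 'i set)"
    using card_of_Times_same_infinite[OF inf] by (simp add: eqpoll_iff_card_of_ordIso)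
  have 2: "lepoll U (UNIV :: 'i set)"
    using lepoll_trans[OF lepoll_trans2[OF a b] lepoll_trans2[OF c e]] .
  have "eqpoll (UNIV :: 'i set) U" by (rule lepoll_antisym[OF 1 2])
  then show ?thesis by (simp add: eqpoll_def)
qed

lemma mult_Pd:
  assumes J: "finite J" and p: "prime p" and dp: "\<And>i. prime (d i)"
  shows "multiplicity p (card (Pd J)) = card {i\<in>J. d i = p}"
proof -
  have "multiplicity p (card (Pd J)) = multiplicity p (\<Prod>i\<in>J. d i)" by (simp add: card_Pd[OF J])
  also have "\<dots> = (\<Sum>i\<in>J. multiplicity p (d i))"
  proof (rule prime_elem_multiplicity_prod_distrib)
    show "prime_elem p" using p by simp
    show "finite J" by fact
    show "0 \<notin> d ` J"
    proof
      assume "0 \<in> d ` J"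
      then obtain i where "d i = 0" by auto
      then show False using d_pos[of i] by simp
    qed
  qed
  also have "\<dots> = (\<Sum>i\<in>J. if d i = p then 1 else 0)"
  proof (rule sum.cong[OF refl])
    fix i assume "i \<in> J"
    show "multiplicity p (d i) = (if d i = p then 1 else 0)"
    proof (cases "d i = p")
      case True
      then show ?thesis using p by (simp add: multiplicity_self prime_gt_0_nat)
    next
      case False
      have "\<not> p dvd d i" using False primes_dvd_imp_eq[OF p dp[of i]] by blast
      then show ?thesis using False by (simp add: not_dvd_imp_multiplicity_0)
    qed
  qed
  also have "\<dots> = card {i\<in>J. d i = p}"
  proof -
    have "card {i\<in>J. d i = p} = (\<Sum>i\<in>{i\<in>J. d i = p}. (1::nat))" by (rule card_eq_sum)
    also have "\<dots> = (\<Sum>i\<in>J. if d i = p then 1 else 0)" by (rule sum.inter_filter[OF J])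
    finally show ?thesis by (rule sym)
  qed
  finally show ?thesis .
qed

end

lemma enat_all_le: "(\<And>t. enat t \<le> x) \<Longrightarrow> x = \<infinity>"
proof (cases x)
  case (enat s)
  assume "\<And>t. enat t \<le> x"
  then have "enat (Suc s) \<le> enat s" using enat by simp
  then show ?thesis by simp
qed simp

theorem theorem8:
  fixes \<tau> :: "nat \<Rightarrow> enat"
  assumes "steinitz \<tau>"
    and "\<exists>q. prime q \<and> \<tau> q = \<infinity>"
    and "infinite (UNIV :: 'b set)"
  shows "\<exists>(m :: ('b \<Rightarrow> 'a::alg_closed_field) \<Rightarrow> ('b \<Rightarrow> 'a) \<Rightarrow> ('b \<Rightarrow> 'a)) e.
           unital_algebra m e \<and> locally_matrix m e \<and> steinitz_char m e = \<tau>"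
proof -
  obtain q where q: "prime q" "\<tau> q = \<infinity>" using assms(2) by blast
  obtain iota :: "nat \<Rightarrow> 'b" where iota: "inj iota" using infinite_countable_subset[OF assms(3)] by blast
  define s where "s n = (case prod_decode n of (a,k) \<Rightarrow> if prime a \<and> enat k < \<tau> a then a else q)" for n
  define d where "d i = (if i \<in> range iota then s (inv_into UNIV iota i) else q)" for i
  have sprime: "prime (s n)" for n using q by (auto simp: s_def split: prod.splits)
  have dprime: "prime (d i)" for i using sprime q by (simp add: d_def)
  have d_iota: "d (iota n) = s n" for n using iota by (simp add: d_def)
  have tensd: "tens d" by unfold_locales (use dprime prime_gt_0_nat in blast)
  interpret tens d by (rule tensd)
  have d2: "\<And>i. 2 \<le> d i" using dprime prime_ge_2_nat by blast
  obtain hb :: "'b \<Rightarrow> ('b \<Rightarrow> nat \<times> nat)" where hb: "bij_betw hb (UNIV :: 'b set) U"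
    using card_U[OF assms(3) d2] by blast
  interpret tens2 d hb by (rule tens2.intro[OF tensd]) (simp add: tens2_axioms_def hb)
  have s_enc: "s (prod_encode (p,k)) = p" if "prime p" "enat k < \<tau> p" for p k
    using that by (simp add: s_def)
  have count_le: "enat (card {i\<in>J. d i = p}) \<le> \<tau> p" if J: "finite J" and p: "prime p" for J p
  proof (cases "\<tau> p")
    case (enat t)
    then have pq: "p \<noteq> q" using q by auto
    have sub: "{i\<in>J. d i = p} \<subseteq> (\<lambda>k. iota (prod_encode (p,k))) ` {..<t}"
    proof
      fix i assume "i \<in> {i\<in>J. d i = p}"
      then have di: "d i = p" by simp
      then have "i \<in> range iota" using pq by (auto simp: d_def split: if_splits)
      then obtain n where n: "i = iota n" by blast
      have sn: "s n = p" using di d_iota n by simp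
      obtain a k where ak: "prod_decode n = (a,k)" by (cases "prod_decode n")
      have "(if prime a \<and> enat k < \<tau> a then a else q) = p" using sn ak by (simp add: s_def)
      then have "prime a \<and> enat k < \<tau> a \<and> a = p" using pq by (simp split: if_splits)
      then have "k < t" "a = p" using enat by auto
      moreover have "n = prod_encode (a,k)" using prod_decode_inverse[of n] ak by simp
      ultimately show "i \<in> (\<lambda>k. iota (prod_encode (p,k))) ` {..<t}" using n by blast
    qed
    have "card {i\<in>J. d i = p} \<le> card ((\<lambda>k. iota (prod_encode (p,k))) ` {..<t})"
      by (rule card_mono[OF _ sub]) simp
    also have "\<dots> \<le> t" using card_image_le[of "{..<t}" "\<lambda>k. iota (prod_encode (p,k))"] by simp
    finally show ?thesis using enat by simp
  qed simp
  have count_ge: "\<exists>J. finite J \<and> card {i\<in>J. d i = p} = t" if p: "prime p" and t: "enat t \<le> \<tau> p" for p t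
  proof -
    let ?J = "(\<lambda>k. iota (prod_encode (p,k))) ` {..<t}"
    have inj: "inj_on (\<lambda>k. iota (prod_encode (p,k))) {..<t}"
    proof (rule inj_onI)
      fix x y assume "iota (prod_encode (p,x)) = iota (prod_encode (p,y))"
      then have "prod_encode (p,x) = prod_encode (p,y)" using iota by (simp add: inj_eq)
      then show "x = y" by simp
    qed
    have "{i\<in>?J. d i = p} = ?J"
    proof (intro equalityI subsetI)
      fix i assume "i \<in> ?J"
      then obtain k where k: "k < t" "i = iota (prod_encode (p,k))" by auto
      have "enat k < enat t" using k(1) by simp
      then have "enat k < \<tau> p" using t by (rule less_le_trans)
      then have "d i = p" using k(2) d_iota s_enc[OF p] by simp
      then show "i \<in> {i\<in>?J. d i = p}" using \<open>i \<in> ?J\<close> by simp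
    qed simp
    moreover have "card ?J = t" using card_image[OF inj] by simp
    ultimately show ?thesis by (intro exI[of _ ?J]) simp
  qed
  let ?D = "matrix_degrees (mA :: ('b \<Rightarrow> 'a) \<Rightarrow> _ \<Rightarrow> _) eA"
  have key: "steinitz_char (mA :: ('b \<Rightarrow> 'a) \<Rightarrow> _ \<Rightarrow> _) eA = \<tau>"
    unfolding steinitz_char_def steinitz_lcm_def
  proof (rule ext)
    fix p
    show "(if prime p then SUP n\<in>?D. enat (multiplicity p n) else 0) = \<tau> p"
    proof (cases "prime p")
      case False
      then show ?thesis using assms(1) by (simp add: steinitz_def)
    next
      case p: True
      have mD: "enat (multiplicity p n) \<le> \<tau> p" if n: "n \<in> ?D" for n
      proof -
        obtain J where J: "finite J" "n dvd card (Pd J)" using R4[OF n] by blast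
        have "multiplicity p n \<le> multiplicity p (card (Pd J))"
          by (rule dvd_imp_multiplicity_le[OF J(2)]) (use card_Pd_pos[OF J(1)] in simp)
        also have "\<dots> = card {i\<in>J. d i = p}" by (rule mult_Pd[OF J(1) p dprime])
        finally have "enat (multiplicity p n) \<le> enat (card {i\<in>J. d i = p})" by simp
        also have "\<dots> \<le> \<tau> p" by (rule count_le[OF J(1) p])
        finally show ?thesis .
      qed
      have ge: "enat t \<le> (SUP n\<in>?D. enat (multiplicity p n))" if t: "enat t \<le> \<tau> p" for t
      proof -
        obtain J where J: "finite J" "card {i\<in>J. d i = p} = t" using count_ge[OF p t] by blast
        have "card (Pd J) \<in> ?D" by (rule R3[OF J(1)])
        moreover have "multiplicity p (card (Pd J)) = t" using mult_Pd[OF J(1) p dprime] J(2) by simp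
        ultimately show ?thesis using SUP_upper[of "card (Pd J)" ?D "\<lambda>n. enat (multiplicity p n)"] by simp
      qed
      have le: "(SUP n\<in>?D. enat (multiplicity p n)) \<le> \<tau> p" by (rule SUP_least) (rule mD)
      have "\<tau> p \<le> (SUP n\<in>?D. enat (multiplicity p n))"
      proof (cases "\<tau> p")
        case (enat t)
        then show ?thesis using ge[of t] by simp
      next
        case infinity
        then have "(SUP n\<in>?D. enat (multiplicity p n)) = \<infinity>" using ge by (intro enat_all_le) simp
        then show ?thesis by simp
      qed
      then show ?thesis using le p by simp
    qed
  qed
  show ?thesis using R1 R2 key by blast
qed


end
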